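(* Let $\eta_\varepsilon$ be as in the context. Let $b\in(-1,1)$, $a\in(0,1)$ (possibly depending on $\varepsilon$), and let $\dot a,\dot b,\dot B$ be real parameters. Set $A=\sqrt{1-b^2}$, $B=\frac{1}{\sqrt2}\sqrt{1-a^2}\sqrt{1-b^2}$, $z_\pm=\varepsilon^{-1}B(x\pm a)$, and define $$ K_{\rm overlap}=\frac12\dot b(1-b^2)^{1/2}\int_{\mathbb R}\eta_\varepsilon^2\big(\tanh(z_+)\mathrm{sech}^2(z_-)-\tanh(z_-)\mathrm{sech}^2(z_+)\big)dx-\varepsilon^{-1}b(1-b^2)^{3/2}(B\dot a+\dot Ba)\int_{\mathbb R}\eta_\varepsilon^2\,\mathrm{sech}^2(z_+)\mathrm{sech}^2(z_-)\,dx . $$ Assume there are constants $C_1,C_2>0$ with $a\le C_1\varepsilon^{1/6}$ and $e^{-4Ba\varepsilon^{-1}}\le C_2\varepsilon^2|\log\varepsilon|$ for all small $\varepsilon$. Then, as $\varepsilon\to0$, $$ K_{\rm overlap}=2\varepsilon\dot b(1-b^2)^{1/2}B^{-1}(1-a^2)\big(1+\mathcal O(\varepsilon^{1/3})\big)-16\,b(1-b^2)^{3/2}\big(\dot a+B^{-1}\dot Ba\big)(1-a^2)e^{-4Ba\varepsilon^{-1}}\big(2Ba\varepsilon^{-1}-1\big)\big(1+\mathcal O(\varepsilon^{1/3})\big). $$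
   Context: For all sufficiently small $\varepsilon>0$, $\eta_\varepsilon:\mathbb R\to(0,\infty)$ is a smooth solution of $\varepsilon^2\eta_\varepsilon''+(1-x^2-\eta_\varepsilon^2)\eta_\varepsilon=0$ on $\mathbb R$ that decays to zero as $|x|\to\infty$ faster than any exponential, and it has the following properties: $\eta_\varepsilon(x)\to\eta_0(x)$ pointwise as $\varepsilon\to0$, where $\eta_0(x)=(1-x^2)^{1/2}$ for $|x|<1$ and $\eta_0(x)=0$ for $|x|>1$; for every compact $K\subset(-1,1)$ there is $C_K>0$ with $\|\eta_\varepsilon-\eta_0\|_{C^1(K)}\le C_K\varepsilon^2$; and there is $C>0$ with $\|\eta_\varepsilon-\eta_0\|_{L^\infty}\le C\varepsilon^{1/3}$, $\|\eta_\varepsilon'\|_{L^\infty}\le C\varepsilon^{-1/3}$, $\|\eta_\varepsilon''\|_{L^\infty}\le C\varepsilon^{-1}$. The notation $f=g(1+\mathcal O(\varepsilon^{1/3}))$ means $|f/g-1|\le C\varepsilon^{1/3}$ for some constant $C$ and all sufficiently small $\varepsilon$. *)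

theory Defs
  imports "HOL-Analysis.Analysis"
begin

definition sech :: "real \<Rightarrow> real" where
  "sech z = 1 / cosh z"

definition eta0 :: "real \<Rightarrow> real" where
  "eta0 x = (if \<bar>x\<bar> < 1 then sqrt (1 - x^2) else 0)"

definition eta0' :: "real \<Rightarrow> real" where
  "eta0' x = - x / sqrt (1 - x^2)"

definition eta_family :: "(real \<Rightarrow> real \<Rightarrow> real) \<Rightarrow> bool" where
  "eta_family \<eta> \<longleftrightarrow> (\<exists>\<epsilon>0>0.
     (\<forall>\<epsilon>. 0 < \<epsilon> \<and> \<epsilon> < \<epsilon>0 \<longrightarrow>
        (\<forall>x. \<eta> \<epsilon> x > 0)
      \<and> (\<forall>n x. ((deriv ^^ n) (\<eta> \<epsilon>)) differentiable (at x))
      \<and> (\<forall>x. \<epsilon>^2 * (deriv ^^ 2) (\<eta> \<epsilon>) x + (1 - x^2 - (\<eta> \<epsilon> x)^2) * \<eta> \<epsilon> x = 0)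
      \<and> (\<forall>c>0. ((\<lambda>x. \<eta> \<epsilon> x * exp (c * \<bar>x\<bar>)) \<longlongrightarrow> 0) at_infinity))
   \<and> (\<forall>x. ((\<lambda>\<epsilon>. \<eta> \<epsilon> x) \<longlongrightarrow> eta0 x) (at_right 0))
   \<and> (\<forall>K. compact K \<and> K \<subseteq> {-1<..<1} \<longrightarrow>
        (\<exists>C>0. \<forall>\<epsilon>. 0 < \<epsilon> \<and> \<epsilon> < \<epsilon>0 \<longrightarrow> (\<forall>x\<in>K.
            \<bar>\<eta> \<epsilon> x - eta0 x\<bar> \<le> C * \<epsilon>^2
          \<and> \<bar>deriv (\<eta> \<epsilon>) x - eta0' x\<bar> \<le> C * \<epsilon>^2)))
   \<and> (\<exists>C>0. \<forall>\<epsilon>. 0 < \<epsilon> \<and> \<epsilon> < \<epsilon>0 \<longrightarrow> (\<forall>x.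
            \<bar>\<eta> \<epsilon> x - eta0 x\<bar> \<le> C * \<epsilon> powr (1/3)
          \<and> \<bar>deriv (\<eta> \<epsilon>) x\<bar> \<le> C * \<epsilon> powr (-1/3)
          \<and> \<bar>(deriv ^^ 2) (\<eta> \<epsilon>) x\<bar> \<le> C / \<epsilon>)))"

definition Bpar :: "real \<Rightarrow> real \<Rightarrow> real" where
  "Bpar a b = (1 / sqrt 2) * sqrt (1 - a^2) * sqrt (1 - b^2)"

definition K_overlap ::
  "(real \<Rightarrow> real \<Rightarrow> real) \<Rightarrow> real \<Rightarrow> real \<Rightarrow> real \<Rightarrow> real \<Rightarrow> real \<Rightarrow> real \<Rightarrow> real" where
  "K_overlap \<eta> \<epsilon> a b ad bd Bd =
    (let B = Bpar a b;
         zp = (\<lambda>x. B * (x + a) / \<epsilon>);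
         zm = (\<lambda>x. B * (x - a) / \<epsilon>)
     in (1/2) * bd * sqrt (1 - b^2) *
          (\<integral>x. (\<eta> \<epsilon> x)^2 * (tanh (zp x) * (sech (zm x))^2 - tanh (zm x) * (sech (zp x))^2) \<partial>lborel)
        - (1/\<epsilon>) * b * (1 - b^2) powr (3/2) * (B * ad + Bd * a) *
          (\<integral>x. (\<eta> \<epsilon> x)^2 * (sech (zp x))^2 * (sech (zm x))^2 \<partial>lborel))"

end

theory Submission
  imports Defs "HOL-Real_Asymp.Real_Asymp"
begin


lemma sech_sq: "sech z ^ 2 = 1 - tanh z ^ 2" for z :: real
proof -
  have "cosh z \<noteq> 0" by (metis cosh_real_pos less_irrefl)
  moreover have "cosh z ^ 2 - sinh z ^2 = 1" by (simp add: cosh_square_eq)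
  moreover have "1 + sinh z ^2 > 0" by (simp add: add_pos_nonneg)
  ultimately show ?thesis unfolding sech_def tanh_def by (simp add: field_simps)
qed

lemma ftc_R:
  fixes F f :: "real \<Rightarrow> real"
  assumes d: "\<And>x. (F has_real_derivative f x) (at x)" and c: "\<And>x. isCont f x"
    and nn: "\<And>x. 0 \<le> f x" and A: "(F \<longlongrightarrow> A) at_bot" and B: "(F \<longlongrightarrow> B) at_top"
  shows "integrable lborel f" "integral\<^sup>L lborel f = B - A"
proof -
  have *: "set_integrable lborel (einterval (-\<infinity>) \<infinity>) f" "(LBINT x=-\<infinity>..\<infinity>. f x) = B - A"
    by (rule interval_integral_FTC_nonneg[where F=F]; (use d c nn A B in \<open>auto simp: ereal_tendsto_simps1\<close>))+
  from *(1) show "integrable lborel f" by (simp add: set_integrable_def)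
  from *(2) show "integral\<^sup>L lborel f = B - A"
    by (simp add: interval_lebesgue_integral_def set_lebesgue_integral_def)
qed

lemma isCont_sech [continuous_intros]: "isCont sech (z::real)"
proof -
  have "cosh z \<noteq> 0" by (metis cosh_real_pos less_irrefl)
  then show ?thesis unfolding sech_def[abs_def] by (intro continuous_intros) auto
qed

lemma tanh_subst:
  fixes \<Phi> \<phi> :: "real \<Rightarrow> real" and k \<beta> :: real
  assumes k: "k > 0" and D: "\<And>t. -1 < t \<Longrightarrow> t < 1 \<Longrightarrow> (\<Phi> has_real_derivative \<phi> t) (at t)"
    and C: "continuous_on {-1..1} \<Phi>" and C2: "continuous_on {-1<..<1} \<phi>"
    and N: "\<And>t. -1 < t \<Longrightarrow> t < 1 \<Longrightarrow> 0 \<le> \<phi> t"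
  shows "integrable lborel (\<lambda>x. sech (k*x+\<beta>)^2 * \<phi> (tanh (k*x+\<beta>)))"
    "(\<integral>x. sech (k*x+\<beta>)^2 * \<phi> (tanh (k*x+\<beta>)) \<partial>lborel) = (\<Phi> 1 - \<Phi> (-1)) / k"
proof -
  define F where "F x = \<Phi> (tanh (k*x+\<beta>)) / k" for x
  have tb: "-1 < tanh y" "tanh y < 1" for y :: real using tanh_real_bounds[of y] by auto
  have cosh_nz: "cosh y \<noteq> 0" for y :: real by (metis cosh_real_pos less_irrefl)
  have dt: "((\<lambda>x. tanh (k*x+\<beta>)) has_real_derivative (1 - tanh (k*x+\<beta>)^2) * k) (at x)" for x
    by (auto intro!: derivative_eq_intros simp: cosh_nz)
  have dF: "(F has_real_derivative sech (k*x+\<beta>)^2 * \<phi> (tanh (k*x+\<beta>))) (at x)" for x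
  proof -
    have "((\<lambda>x. \<Phi> (tanh (k*x+\<beta>))) has_real_derivative \<phi> (tanh (k*x+\<beta>)) * ((1 - tanh (k*x+\<beta>)^2) * k)) (at x)"
      by (rule DERIV_chain2[OF D dt]) (use tb in auto)
    then have "(F has_real_derivative \<phi> (tanh (k*x+\<beta>)) * ((1 - tanh (k*x+\<beta>)^2) * k) / k) (at x)"
      unfolding F_def by (rule DERIV_cdivide)
    then show ?thesis using k by (simp add: sech_sq mult.commute)
  qed
  have cphi: "isCont \<phi> t" if "-1 < t" "t < 1" for t
    using C2 that by (simp add: continuous_on_eq_continuous_at)
  have cf: "isCont (\<lambda>x. sech (k*x+\<beta>)^2 * \<phi> (tanh (k*x+\<beta>))) x" for x
  proof -
    have "isCont (\<lambda>x. tanh (k*x+\<beta>)) x" by (intro continuous_intros) (simp add: cosh_nz)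
    moreover have "isCont \<phi> (tanh (k*x+\<beta>))" using cphi tb by auto
    ultimately have "isCont (\<lambda>x. \<phi> (tanh (k*x+\<beta>))) x" by (rule isCont_o2)
    moreover have "isCont (\<lambda>x. sech (k*x+\<beta>)) x"
      by (rule isCont_o2[where f="\<lambda>x. k*x+\<beta>", OF _ isCont_sech]) (intro continuous_intros)
    ultimately show ?thesis by (intro continuous_intros)
  qed
  have nn: "0 \<le> sech (k*x+\<beta>)^2 * \<phi> (tanh (k*x+\<beta>))" for x using N tb by auto
  have lin_top: "filterlim (\<lambda>x. k*x+\<beta>) at_top at_top" using k by real_asymp
  have lin_bot: "filterlim (\<lambda>x. k*x+\<beta>) at_bot at_bot" using k by real_asymp
  have t1: "((\<lambda>x. tanh (k*x+\<beta>)) \<longlongrightarrow> 1) at_top"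
    using filterlim_compose[OF tanh_real_at_top lin_top] by simp
  have t2: "((\<lambda>x. tanh (k*x+\<beta>)) \<longlongrightarrow> -1) at_bot"
    using filterlim_compose[OF tanh_real_at_bot lin_bot] by simp
  have "(F \<longlongrightarrow> \<Phi> 1 / k) at_top" unfolding F_def
    by (intro tendsto_divide tendsto_const continuous_on_tendsto_compose[OF C t1]) (use tb k in \<open>auto intro!: always_eventually less_imp_le\<close>)
  moreover have "(F \<longlongrightarrow> \<Phi> (-1) / k) at_bot" unfolding F_def
    by (intro tendsto_divide tendsto_const continuous_on_tendsto_compose[OF C t2]) (use tb k in \<open>auto intro!: always_eventually less_imp_le\<close>)
  ultimately have r: "integrable lborel (\<lambda>x. sech (k*x+\<beta>)^2 * \<phi> (tanh (k*x+\<beta>)))"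
    "(\<integral>x. sech (k*x+\<beta>)^2 * \<phi> (tanh (k*x+\<beta>)) \<partial>lborel) = \<Phi> 1 / k - \<Phi> (-1) / k"
    using ftc_R[OF dF cf nn] by auto
  then show "integrable lborel (\<lambda>x. sech (k*x+\<beta>)^2 * \<phi> (tanh (k*x+\<beta>)))"
    "(\<integral>x. sech (k*x+\<beta>)^2 * \<phi> (tanh (k*x+\<beta>)) \<partial>lborel) = (\<Phi> 1 - \<Phi> (-1)) / k"
    by (auto simp: diff_divide_distrib)
qed

lemma int_sech2:
  assumes k: "k > (0::real)"
  shows "integrable lborel (\<lambda>x. sech (k*x+\<beta>)^2)" "(\<integral>x. sech (k*x+\<beta>)^2 \<partial>lborel) = 2 / k"
  using tanh_subst[OF k, of "\<lambda>t. t" "\<lambda>t. 1" \<beta>] by (auto intro!: derivative_eq_intros continuous_intros)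

definition PhiW :: "real \<Rightarrow> real \<Rightarrow> real" where
  "PhiW T t = (1 - T^2) / T^3 * ((T^2 - 1) / (1 - T*t) - 2 * ln (1 - T*t) + (1 - T*t))"
definition phiW :: "real \<Rightarrow> real \<Rightarrow> real" where
  "phiW T t = (1 - t^2) * (1 - T^2) / (1 - t*T)^2"
definition PhiH :: "real \<Rightarrow> real \<Rightarrow> real" where
  "PhiH T t = t * (t - T) / (1 - t*T) + 2 * t / T + 2 * ((1 - T^2) / T^2) * ln (1 - T*t)"
definition phiH :: "real \<Rightarrow> real \<Rightarrow> real" where
  "phiH T t = T * (1 + t^2 - 2*t*T) / (1 - t*T)^2"

lemma lin_deriv: "((\<lambda>z. 1 - T*z) has_real_derivative -T) (at t)"
  by (auto intro!: derivative_eq_intros)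

lemma ln_lin_deriv: "1 - T*t > 0 \<Longrightarrow> ((\<lambda>z. ln (1 - T*z)) has_real_derivative -T/(1 - T*t)) (at t)"
  using DERIV_chain2[OF DERIV_ln_divide lin_deriv, of T t] by simp

lemma inv_lin_deriv: "1 - T*t > 0 \<Longrightarrow> ((\<lambda>z. 1 / (1 - T*z)) has_real_derivative T/(1 - T*t)^2) (at t)"
  using DERIV_inverse_fun[OF lin_deriv, of T t] by (simp add: divide_inverse power2_eq_square)

lemma PhiW_deriv:
  assumes T: "0 < T" "T < 1" and t: "-1 < t" "t < 1"
  shows "(PhiW T has_real_derivative phiW T t) (at t)"
proof -
  have v: "1 - T*t > 0" using T t
    by (smt (verit, ccfv_SIG) mult_le_cancel_left1 mult_minus_right)
  have "((\<lambda>z. (1 - T^2) / T^3 * ((T^2 - 1) * (1 / (1 - T*z)) - 2 * ln (1 - T*z) + (1 - T*z))) has_real_derivative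
     (1 - T^2) / T^3 * ((T^2 - 1) * (T/(1 - T*t)^2) - 2 * (-T/(1 - T*t)) + -T)) (at t)"
    by (intro DERIV_cmult DERIV_add DERIV_diff inv_lin_deriv ln_lin_deriv lin_deriv v)
  moreover have "(\<lambda>z. (1 - T^2) / T^3 * ((T^2 - 1) * (1 / (1 - T*z)) - 2 * ln (1 - T*z) + (1 - T*z))) = PhiW T"
    by (auto simp: PhiW_def fun_eq_iff)
  moreover have "(1 - T^2) / T^3 * ((T^2 - 1) * (T/(1 - T*t)^2) - 2 * (-T/(1 - T*t)) + -T) = phiW T t"
    unfolding phiW_def using v T
    apply (simp add: divide_simps power2_eq_square power3_eq_cube)
    apply (simp add: algebra_simps)
    done
  ultimately show ?thesis by simp
qed

lemma PhiH_deriv: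
  assumes T: "0 < T" "T < 1" and t: "-1 < t" "t < 1"
  shows "(PhiH T has_real_derivative phiH T t) (at t)"
proof -
  have v: "1 - T*t > 0" using T t
    by (smt (verit, ccfv_SIG) mult_le_cancel_left1 mult_minus_right)
  have "((\<lambda>z. z * (z - T) * (1 / (1 - T*z)) + 2 / T * z + 2 * ((1 - T^2) / T^2) * ln (1 - T*z)) has_real_derivative phiH T t) (at t)"
    apply (rule DERIV_cong[OF DERIV_add[OF DERIV_add[OF DERIV_mult[OF DERIV_mult[OF DERIV_ident DERIV_diff[OF DERIV_ident DERIV_const]] inv_lin_deriv[OF v]]
          DERIV_cmult[OF DERIV_ident]] DERIV_cmult[OF ln_lin_deriv[OF v]]]])
    unfolding phiH_def using v T
    apply (simp add: divide_simps power2_eq_square power3_eq_cube)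
    apply (simp add: algebra_simps)
    done
  moreover have "(\<lambda>z. z * (z - T) * (1 / (1 - T*z)) + 2 / T * z + 2 * ((1 - T^2) / T^2) * ln (1 - T*z)) = PhiH T"
    by (auto simp: PhiH_def fun_eq_iff mult.commute)
  ultimately show ?thesis by simp
qed

lemma v_pos: "0 < T \<Longrightarrow> T < 1 \<Longrightarrow> -1 \<le> t \<Longrightarrow> t \<le> 1 \<Longrightarrow> 1 - T*t > (0::real)"
proof -
  assume a: "0 < T" "T < 1" "-1 \<le> t" "t \<le> 1"
  have "T*t \<le> T" using mult_left_le[of t T] a by auto
  then show ?thesis using a by linarith
qed

lemma PhiW_val:
  assumes T: "0 < T" "T < 1"
  shows "PhiW T 1 - PhiW T (-1) = (1 - T^2) / T^3 * (2 * ln ((1+T)/(1-T)) - 4*T)"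
proof -
  have e: "ln ((1+T)/(1-T)) = ln (1+T) - ln (1-T)" using T by (simp add: ln_div)
  have n: "1 - T \<noteq> 0" "1 + T \<noteq> 0" using T by auto
  have "PhiW T 1 - PhiW T (-1) = (1-T^2)/T^3 * (((T^2-1)/(1-T) - (T^2-1)/(1+T)) - 2*ln(1-T) + 2*ln(1+T) - 2*T)"
    by (simp add: PhiW_def algebra_simps diff_divide_distrib add_divide_distrib)
  moreover have "(T^2 - 1) / (1 - T) - (T^2 - 1) / (1 + T) = -2*T" using n
    by (simp add: divide_simps power2_eq_square) (simp add: algebra_simps)
  ultimately show ?thesis unfolding e by (simp add: algebra_simps)
qed

lemma PhiH_val:
  assumes T: "0 < T" "T < 1"
  shows "PhiH T 1 - PhiH T (-1) = 4 / T - 2 * ((1 - T^2) / T^2) * ln ((1+T)/(1-T))"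
proof -
  have e: "ln ((1+T)/(1-T)) = ln (1+T) - ln (1-T)" using T by (simp add: ln_div)
  have n: "1 - T \<noteq> 0" "1 + T \<noteq> 0" using T by auto
  show ?thesis unfolding PhiH_def e using n T
    by (simp add: field_simps power2_eq_square power3_eq_cube)
qed

lemma PhiW_cont: assumes "0 < T" "T < 1" shows "continuous_on {-1..1} (PhiW T)"
proof -
  have p: "\<forall>t\<in>{-1..1}. 1 - T*t > 0" using v_pos[OF assms] by auto
  show ?thesis unfolding PhiW_def[abs_def]
    apply (intro continuous_intros)
    using p by force+
qed

lemma PhiH_cont: assumes "0 < T" "T < 1" shows "continuous_on {-1..1} (PhiH T)"
proof -
  have p: "\<forall>t\<in>{-1..1}. 1 - t*T > 0 \<and> 1 - T*t > 0" using v_pos[OF assms] by (auto simp: mult.commute)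
  show ?thesis unfolding PhiH_def[abs_def]
    apply (intro continuous_intros)
    using p assms by force+
qed

lemma phiW_cont: assumes "0 < T" "T < 1" shows "continuous_on {-1<..<1} (phiW T)"
proof -
  have p: "\<forall>t\<in>{-1<..<1}. 1 - t*T > 0" using v_pos[OF assms] by (auto simp: mult.commute)
  show ?thesis unfolding phiW_def[abs_def]
    apply (intro continuous_intros)
    using p by force+
qed

lemma phiH_cont: assumes "0 < T" "T < 1" shows "continuous_on {-1<..<1} (phiH T)"
proof -
  have p: "\<forall>t\<in>{-1<..<1}. 1 - t*T > 0" using v_pos[OF assms] by (auto simp: mult.commute)
  show ?thesis unfolding phiH_def[abs_def]
    apply (intro continuous_intros)
    using p by force+
qed

lemma phiW_nn: assumes "0 < T" "T < 1" "-1 < t" "t < 1" shows "0 \<le> phiW T t"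
proof -
  have "t^2 \<le> 1" "T^2 \<le> 1" using assms by (auto simp: abs_square_le_1)
  then show ?thesis unfolding phiW_def by simp
qed

lemma phiH_nn: assumes "0 < T" "T < 1" "-1 < t" "t < 1" shows "0 \<le> phiH T t"
proof -
  have "t*T \<le> \<bar>t\<bar>"
  proof -
    have "t*T \<le> \<bar>t\<bar>*T" using assms by (simp add: mult_right_mono)
    also have "\<dots> \<le> \<bar>t\<bar>" using assms by (simp add: mult_left_le)
    finally show ?thesis .
  qed
  moreover have "0 \<le> (1 - \<bar>t\<bar>)^2" by simp
  moreover have "(1 - \<bar>t\<bar>)^2 = 1 + t^2 - 2*\<bar>t\<bar>" by (simp add: power2_eq_square algebra_simps)
  ultimately have "0 \<le> 1 + t^2 - 2*t*T" by linarith
  then show ?thesis unfolding phiH_def using assms by simp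
qed

lemma cosh_nz: "cosh (y::real) \<noteq> 0" by (metis cosh_real_pos less_irrefl)

lemma tanh_diff: "tanh (p - d) = (tanh p - tanh d) / (1 - tanh p * tanh d)" for p d :: real
  using tanh_add[of p "-d", OF cosh_nz cosh_nz] by simp

lemma tanh_ab: "\<bar>tanh (y::real)\<bar> < 1" using tanh_real_bounds[of y] by auto

lemma one_minus_tt: "1 - tanh p * tanh d > (0::real)"
proof -
  have "tanh p * tanh d \<le> \<bar>tanh p * tanh d\<bar>" by simp
  also have "\<dots> = \<bar>tanh p\<bar> * \<bar>tanh d\<bar>" by (simp add: abs_mult)
  also have "\<dots> \<le> \<bar>tanh p\<bar>" using tanh_ab[of d] by (intro mult_left_le) auto
  also have "\<dots> < 1" using tanh_ab[of p] .
  finally show ?thesis by simp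
qed

lemma sech_diff_form: "sech (p - d)^2 = phiW (tanh d) (tanh p)" for p d :: real
proof -
  let ?s = "tanh p" let ?T = "tanh d"
  have n: "1 - ?s * ?T \<noteq> 0" using one_minus_tt[of p d] by simp
  have "sech (p-d)^2 = 1 - ((?s - ?T)/(1 - ?s*?T))^2" by (simp add: sech_sq tanh_diff)
  also have "\<dots> = (1 - ?s^2) * (1 - ?T^2) / (1 - ?s*?T)^2" using n
    by (simp add: divide_simps power2_eq_square) (simp add: algebra_simps)
  finally show ?thesis by (simp add: phiW_def)
qed

lemma h_form: "tanh p * sech (p - d)^2 - tanh (p - d) * sech p^2 = sech p^2 * phiH (tanh d) (tanh p)" for p d :: real
proof -
  let ?s = "tanh p" let ?T = "tanh d"
  have n: "1 - ?s * ?T \<noteq> 0" using one_minus_tt[of p d] by simp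
  have s1: "sech (p-d)^2 = (1 - ?s^2) * (1 - ?T^2) / (1 - ?s*?T)^2"
    using sech_diff_form[of p d] by (simp add: phiW_def)
  have "tanh p * sech (p - d)^2 - tanh (p - d) * sech p^2 = ?s * ((1 - ?s^2) * (1 - ?T^2) / (1 - ?s*?T)^2) - (?s - ?T)/(1 - ?s*?T) * (1 - ?s^2)"
    unfolding s1 by (simp add: tanh_diff sech_sq)
  also have "\<dots> = (1 - ?s^2) * (?T * (1 + ?s^2 - 2*?s*?T) / (1 - ?s*?T)^2)" using n
    by (simp add: divide_simps power2_eq_square) (simp add: algebra_simps)
  finally show ?thesis by (simp add: phiH_def sech_sq)
qed

lemma ln_ratio_tanh: "ln ((1 + tanh y) / (1 - tanh y)) = 2 * y" for y :: real
  using artanh_tanh_real[of y] by (simp add: artanh_def)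

lemma int_W:
  assumes k: "k > 0" and a: "a > 0"
  defines "T \<equiv> tanh (2*k*a)"
  shows "integrable lborel (\<lambda>x. sech (k*x+k*a)^2 * sech (k*x-k*a)^2)"
    "(\<integral>x. sech (k*x+k*a)^2 * sech (k*x-k*a)^2 \<partial>lborel) = (1 - T^2) / T^3 * (8*k*a - 4*T) / k"
proof -
  have T: "0 < T" "T < 1" unfolding T_def using k a tanh_real_bounds[of "2*k*a"] by auto
  have e: "sech (k*x-k*a)^2 = phiW T (tanh (k*x+k*a))" for x
    using sech_diff_form[of "k*x+k*a" "2*k*a"] unfolding T_def by (simp add: algebra_simps)
  note r = tanh_subst[OF k PhiW_deriv[OF T] PhiW_cont[OF T] phiW_cont[OF T] phiW_nn[OF T], of "k*a"]
  show "integrable lborel (\<lambda>x. sech (k*x+k*a)^2 * sech (k*x-k*a)^2)" using r(1) by (simp add: e)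
  have "ln ((1+T)/(1-T)) = 4*k*a" unfolding T_def using ln_ratio_tanh[of "2*k*a"] by simp
  then show "(\<integral>x. sech (k*x+k*a)^2 * sech (k*x-k*a)^2 \<partial>lborel) = (1 - T^2) / T^3 * (8*k*a - 4*T) / k"
    using r(2) by (simp add: e PhiW_val[OF T])
qed

lemma int_H:
  assumes k: "k > 0" and a: "a > 0"
  defines "T \<equiv> tanh (2*k*a)"
  shows "integrable lborel (\<lambda>x. tanh (k*x+k*a) * sech (k*x-k*a)^2 - tanh (k*x-k*a) * sech (k*x+k*a)^2)"
    "(\<integral>x. tanh (k*x+k*a) * sech (k*x-k*a)^2 - tanh (k*x-k*a) * sech (k*x+k*a)^2 \<partial>lborel) = (4 / T - 2 * ((1 - T^2) / T^2) * (4*k*a)) / k"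
proof -
  have T: "0 < T" "T < 1" unfolding T_def using k a tanh_real_bounds[of "2*k*a"] by auto
  have e: "tanh (k*x+k*a) * sech (k*x-k*a)^2 - tanh (k*x-k*a) * sech (k*x+k*a)^2 = sech (k*x+k*a)^2 * phiH T (tanh (k*x+k*a))" for x
    using h_form[of "k*x+k*a" "2*k*a"] unfolding T_def by (simp add: algebra_simps)
  note r = tanh_subst[OF k PhiH_deriv[OF T] PhiH_cont[OF T] phiH_cont[OF T] phiH_nn[OF T], of "k*a"]
  show "integrable lborel (\<lambda>x. tanh (k*x+k*a) * sech (k*x-k*a)^2 - tanh (k*x-k*a) * sech (k*x+k*a)^2)" using r(1) by (simp add: e)
  have "ln ((1+T)/(1-T)) = 4*k*a" unfolding T_def using ln_ratio_tanh[of "2*k*a"] by simp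
  then show "(\<integral>x. tanh (k*x+k*a) * sech (k*x-k*a)^2 - tanh (k*x-k*a) * sech (k*x+k*a)^2 \<partial>lborel) = (4 / T - 2 * ((1 - T^2) / T^2) * (4*k*a)) / k"
    using r(2) by (simp add: e PhiH_val[OF T])
qed

lemma cosh_exp_bounds: "exp \<bar>y\<bar> / 2 \<le> cosh y" "cosh y \<le> exp \<bar>y\<bar>" for y :: real
proof -
  have c: "cosh y = (exp \<bar>y\<bar> + exp (-\<bar>y\<bar>)) / 2"
    using cosh_real_abs[of y] cosh_field_def[of "\<bar>y\<bar>"] by simp
  have "exp (-\<bar>y\<bar>) \<le> exp \<bar>y\<bar>" by simp
  then show "exp \<bar>y\<bar> / 2 \<le> cosh y" unfolding c
    using exp_gt_zero[of "-\<bar>y\<bar>"] by (simp add: field_simps)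
  show "cosh y \<le> exp \<bar>y\<bar>" unfolding c
    using exp_gt_zero[of "-\<bar>y\<bar>"] \<open>exp (-\<bar>y\<bar>) \<le> exp \<bar>y\<bar>\<close> by (simp add: field_simps)
qed

lemma sech_pos: "sech y > 0" for y :: real
  unfolding sech_def by simp

lemma sech_le1: "sech y \<le> 1" for y :: real
  unfolding sech_def using cosh_real_ge_1[of y] by simp

lemma sech2_upper: "sech y^2 \<le> 4 * exp (-2*\<bar>y\<bar>)" for y :: real
proof -
  have "sech y \<le> 2 * exp (-\<bar>y\<bar>)" unfolding sech_def using cosh_exp_bounds(1)[of y]
    by (simp add: divide_simps exp_minus)
  then have "sech y^2 \<le> (2 * exp (-\<bar>y\<bar>))^2" using sech_pos[of y] by (intro power_mono) auto
  also have "\<dots> = 4 * exp (-2*\<bar>y\<bar>)" by (simp add: power2_eq_square exp_add[symmetric])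
  finally show ?thesis .
qed

lemma sech2_lower: "exp (-2*\<bar>y\<bar>) \<le> sech y^2" for y :: real
proof -
  have "exp (-\<bar>y\<bar>) \<le> sech y" unfolding sech_def using cosh_exp_bounds(2)[of y]
    by (simp add: divide_simps exp_minus)
  then have "exp (-\<bar>y\<bar>)^2 \<le> sech y^2" by (intro power_mono) auto
  then show ?thesis by (simp add: power2_eq_square exp_add[symmetric])
qed

lemma t2exp: "t \<ge> 0 \<Longrightarrow> t^2 * exp (-2*t) \<le> (1::real)"
proof -
  assume t: "t \<ge> 0"
  have "t \<le> exp t" using exp_ge_add_one_self[of t] by linarith
  then have "t^2 \<le> exp t ^2" using t by (intro power_mono) auto
  also have "exp t^2 = exp (2*t)" by (simp add: power2_eq_square exp_add[symmetric])
  finally show ?thesis by (simp add: exp_minus field_simps)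
qed

lemma y2sech2: "y^2 * sech y^2 \<le> 16 * sech (y/2)^2" for y :: real
proof -
  have "\<bar>y\<bar>/2 \<le> exp (\<bar>y\<bar>/2)" using exp_ge_add_one_self[of "\<bar>y\<bar>/2"] by linarith
  then have "(\<bar>y\<bar>/2)^2 \<le> exp (\<bar>y\<bar>/2)^2" by (intro power_mono) auto
  also have "exp (\<bar>y\<bar>/2)^2 = exp \<bar>y\<bar>" by (simp add: power2_eq_square exp_add[symmetric])
  finally have a: "y^2 * exp (-\<bar>y\<bar>) \<le> 4" by (simp add: exp_minus field_simps power2_eq_square)
  have "y^2 * sech y^2 \<le> y^2 * (4 * exp (-2*\<bar>y\<bar>))" by (intro mult_left_mono sech2_upper) auto
  also have "\<dots> = 4 * (y^2 * exp (-\<bar>y\<bar>)) * exp (-\<bar>y\<bar>)" by (simp add: exp_add[symmetric])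
  also have "\<dots> \<le> 4 * 4 * exp (-\<bar>y\<bar>)" using a by (intro mult_right_mono mult_left_mono) auto
  also have "exp (-\<bar>y\<bar>) \<le> sech (y/2)^2" using sech2_lower[of "y/2"] by simp
  finally show ?thesis by simp
qed

lemma weighted:
  fixes f w g :: "real \<Rightarrow> real"
  assumes w: "integrable lborel w" "\<And>x. 0 \<le> w x" and fm: "f \<in> borel_measurable borel"
    and wm: "w \<in> borel_measurable borel"
    and fg: "\<And>x. \<bar>f x - L\<bar> \<le> g x" and gw: "integrable lborel (\<lambda>x. g x * w x)"
  shows "integrable lborel (\<lambda>x. f x * w x)"
    "\<bar>(\<integral>x. f x * w x \<partial>lborel) - L * (\<integral>x. w x \<partial>lborel)\<bar> \<le> (\<integral>x. g x * w x \<partial>lborel)"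
proof -
  have i1: "integrable lborel (\<lambda>x. \<bar>L\<bar> * w x + g x * w x)" using w gw by auto
  have b: "\<bar>f x * w x\<bar> \<le> \<bar>L\<bar> * w x + g x * w x" for x
  proof -
    have "\<bar>f x\<bar> \<le> \<bar>L\<bar> + g x" using fg[of x] by linarith
    then have "\<bar>f x\<bar> * w x \<le> (\<bar>L\<bar> + g x) * w x" using w(2)[of x] by (rule mult_right_mono)
    then show ?thesis using w(2)[of x] by (simp add: abs_mult algebra_simps)
  qed
  show fi: "integrable lborel (\<lambda>x. f x * w x)"
    by (rule Bochner_Integration.integrable_bound[OF i1]) (use fm wm b in \<open>auto intro!: borel_measurable_times AE_I2 order_trans[OF b abs_ge_self] simp: measurable_lborel1\<close>)
  have "(\<integral>x. f x * w x \<partial>lborel) - L * (\<integral>x. w x \<partial>lborel) = (\<integral>x. (f x - L) * w x \<partial>lborel)"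
    using fi w by (simp add: left_diff_distrib)
  also have "\<bar>\<dots>\<bar> \<le> (\<integral>x. g x * w x \<partial>lborel)"
  proof (rule integral_abs_bound_integral)
    have "integrable lborel (\<lambda>x. f x * w x - L * w x)" using fi w by auto
    then show "integrable lborel (\<lambda>x. (f x - L) * w x)" by (simp add: left_diff_distrib)
  qed (use gw fg w in \<open>auto simp: abs_mult intro!: mult_right_mono\<close>)
  finally show "\<bar>(\<integral>x. f x * w x \<partial>lborel) - L * (\<integral>x. w x \<partial>lborel)\<bar> \<le> (\<integral>x. g x * w x \<partial>lborel)" .
qed

lemma int_sech2_m:
  assumes k: "k > (0::real)"
  shows "integrable lborel (\<lambda>x. sech (k*x-\<beta>)^2)" "(\<integral>x. sech (k*x-\<beta>)^2 \<partial>lborel) = 2 / k"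
  using int_sech2[OF k, of "-\<beta>"] by simp_all

lemma sech_even: "sech (-y) = sech y" by (simp add: sech_def)

lemma W_pt_pos:
  assumes k: "k > 0" and a: "a > 0" and x: "x > a"
  shows "x^2 * (sech (k*x+k*a)^2 * sech (k*x-k*a)^2) \<le> 32 * exp (-4*k*a) * (a^2 + 1/k^2) * sech (k*x-k*a)^2"
proof -
  define t where "t = k*(x-a)"
  have t: "t > 0" using k x by (simp add: t_def)
  have P: "sech (k*x+k*a)^2 \<le> 4*exp(-2*t)*exp(-4*k*a)"
  proof -
    have "\<bar>k*x+k*a\<bar> = t + 2*k*a" using k a x t by (simp add: t_def algebra_simps)
    then show ?thesis using sech2_upper[of "k*x+k*a"] by (simp add: exp_add[symmetric] algebra_simps)
  qed
  have aq: "\<bar>k*x-k*a\<bar> = t" using t by (simp add: t_def algebra_simps)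
  have Q: "sech (k*x-k*a)^2 \<le> 4*exp(-2*t)" "exp(-2*t) \<le> sech (k*x-k*a)^2"
    using sech2_upper[of "k*x-k*a"] sech2_lower[of "k*x-k*a"] aq by auto
  have xe: "x = a + t/k" using k by (simp add: t_def field_simps)
  have hx: "x^2 \<le> 2*a^2 + 2*(t^2/k^2)"
  proof -
    have "(a + t/k)^2 + (a - t/k)^2 = 2*a^2 + 2*(t/k)^2" by (simp add: power2_eq_square algebra_simps)
    moreover have "0 \<le> (a - t/k)^2" by simp
    ultimately have "(a + t/k)^2 \<le> 2*a^2 + 2*(t/k)^2" by linarith
    then show ?thesis unfolding xe by (simp add: power_divide)
  qed
  have ht: "t^2 * exp(-2*t) \<le> 1" using t2exp[of t] t by simp
  have e1: "exp(-2*t) \<le> 1" using t by simp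
  have "x^2 * (sech (k*x+k*a)^2 * sech (k*x-k*a)^2) \<le> (2*a^2 + 2*(t^2/k^2)) * ((4*exp(-2*t)*exp(-4*k*a)) * (4*exp(-2*t)))"
    using hx P Q(1) by (intro mult_mono) auto
  also have "\<dots> = 32*exp(-4*k*a)*exp(-2*t)*(a^2*exp(-2*t) + (t^2*exp(-2*t))/k^2)" by (simp add: algebra_simps)
  also have "\<dots> \<le> 32*exp(-4*k*a)*exp(-2*t)*(a^2*1 + 1/k^2)"
    using ht e1 k by (intro mult_left_mono add_mono divide_right_mono) auto
  also have "\<dots> = 32 * exp (-4*k*a) * (a^2 + 1/k^2) * exp(-2*t)" by simp
  also have "\<dots> \<le> 32 * exp (-4*k*a) * (a^2 + 1/k^2) * sech (k*x-k*a)^2"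
    using Q(2) by (intro mult_left_mono) auto
  finally show ?thesis .
qed

lemma W_pt:
  assumes k: "k > 0" and a: "a > 0"
  shows "x^2 * (sech (k*x+k*a)^2 * sech (k*x-k*a)^2) \<le> a^2 * (sech (k*x+k*a)^2 * sech (k*x-k*a)^2)
     + 32 * exp (-4*k*a) * (a^2 + 1/k^2) * (sech (k*x+k*a)^2 + sech (k*x-k*a)^2)"
proof -
  have nn: "0 \<le> 32 * exp (-4*k*a) * (a^2 + 1/k^2)" by simp
  consider "x > a" | "x < -a" | "\<bar>x\<bar> \<le> a" by linarith
  then show ?thesis
  proof cases
    case 1
    then show ?thesis using W_pt_pos[OF k a 1] nn
      by (smt (verit, best) mult_left_mono mult_nonneg_nonneg zero_le_power2)
  next
    case 2
    have "(-x)^2 * (sech (k*(-x)+k*a)^2 * sech (k*(-x)-k*a)^2) \<le> 32 * exp (-4*k*a) * (a^2 + 1/k^2) * sech (k*(-x)-k*a)^2"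
      using W_pt_pos[OF k a, of "-x"] 2 by simp
    moreover have "sech (k*(-x)+k*a) = sech (k*x-k*a)" "sech (k*(-x)-k*a) = sech (k*x+k*a)"
    proof -
      have "k*(-x)+k*a = -(k*x-k*a)" "k*(-x)-k*a = -(k*x+k*a)" by (simp_all add: algebra_simps)
      then show "sech (k*(-x)+k*a) = sech (k*x-k*a)" "sech (k*(-x)-k*a) = sech (k*x+k*a)"
        by (simp_all only: sech_even)
    qed
    ultimately show ?thesis using nn
      by (smt (verit, best) mult_left_mono mult_nonneg_nonneg zero_le_power2 power2_minus mult.commute)
  next
    case 3
    then have "x^2 \<le> a^2" by (metis abs_ge_zero power2_abs power_mono)
    then have "x^2 * (sech (k*x+k*a)^2 * sech (k*x-k*a)^2) \<le> a^2 * (sech (k*x+k*a)^2 * sech (k*x-k*a)^2)"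
      by (intro mult_right_mono) auto
    then show ?thesis using nn by (smt (verit) mult_nonneg_nonneg zero_le_power2)
  qed
qed

lemma sq_split: "x^2 \<le> 2*a^2 + 2*(x-a)^2" "x^2 \<le> 2*a^2 + 2*(x+a)^2" for x a :: real
proof -
  have "x^2 + (x - 2*a)^2 = 2*a^2 + 2*(x-a)^2" "x^2 + (x + 2*a)^2 = 2*a^2 + 2*(x+a)^2"
    by (simp_all add: power2_eq_square algebra_simps)
  moreover have "0 \<le> (x - 2*a)^2" "0 \<le> (x + 2*a)^2" by simp_all
  ultimately show "x^2 \<le> 2*a^2 + 2*(x-a)^2" "x^2 \<le> 2*a^2 + 2*(x+a)^2" by linarith+
qed

definition Hf :: "real \<Rightarrow> real \<Rightarrow> real \<Rightarrow> real" where
  "Hf k a x = tanh (k*x+k*a) * sech (k*x-k*a)^2 - tanh (k*x-k*a) * sech (k*x+k*a)^2"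

lemma H_nonneg: assumes k: "k > 0" and a: "a > 0" shows "0 \<le> Hf k a x"
proof -
  have T: "0 < tanh (2*k*a)" "tanh (2*k*a) < 1" using k a tanh_real_bounds[of "2*k*a"] by auto
  have "Hf k a x = sech (k*x+k*a)^2 * phiH (tanh (2*k*a)) (tanh (k*x+k*a))"
    using h_form[of "k*x+k*a" "2*k*a"] unfolding Hf_def by (simp add: algebra_simps)
  moreover have "0 \<le> phiH (tanh (2*k*a)) (tanh (k*x+k*a))"
    using phiH_nn[OF T] tanh_real_bounds[of "k*x+k*a"] by auto
  ultimately show ?thesis by simp
qed

lemma H_le: "Hf k a x \<le> sech (k*x+k*a)^2 + sech (k*x-k*a)^2"
proof -
  have "tanh (k*x+k*a) * sech (k*x-k*a)^2 \<le> 1 * sech (k*x-k*a)^2"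
    using tanh_real_bounds[of "k*x+k*a"] by (intro mult_right_mono) auto
  moreover have "- tanh (k*x-k*a) * sech (k*x+k*a)^2 \<le> 1 * sech (k*x+k*a)^2"
    using tanh_real_bounds[of "k*x-k*a"] by (intro mult_right_mono) auto
  ultimately show ?thesis unfolding Hf_def by simp
qed

lemma Q_moment:
  assumes k: "k > 0"
  shows "x^2 * sech (k*x-k*a)^2 \<le> 2*a^2 * sech (k*x-k*a)^2 + 32/k^2 * sech ((k/2)*x-(k/2)*a)^2"
proof -
  have "x^2 * sech (k*x-k*a)^2 \<le> (2*a^2 + 2*(x-a)^2) * sech (k*x-k*a)^2"
    using sq_split(1)[of x a] by (intro mult_right_mono) auto
  also have "(x-a)^2 = (k*x-k*a)^2 / k^2" using k by (simp add: power2_eq_square field_simps)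
  also have "(k*x-k*a)^2 / k^2 * sech (k*x-k*a)^2 \<le> 16 * sech ((k*x-k*a)/2)^2 / k^2"
    using y2sech2[of "k*x-k*a"] k by (simp add: divide_right_mono)
  then have "(2*a^2 + 2*((k*x-k*a)^2 / k^2)) * sech (k*x-k*a)^2 \<le> 2*a^2 * sech (k*x-k*a)^2 + 2 * (16 * sech ((k*x-k*a)/2)^2 / k^2)"
    by (simp add: algebra_simps)
  also have "(k*x-k*a)/2 = (k/2)*x-(k/2)*a" by (simp add: field_simps)
  finally show ?thesis by simp
qed

lemma P_moment:
  assumes k: "k > 0"
  shows "x^2 * sech (k*x+k*a)^2 \<le> 2*a^2 * sech (k*x+k*a)^2 + 32/k^2 * sech ((k/2)*x+(k/2)*a)^2"
  using Q_moment[OF k, of x "-a"] by simp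

lemma H_pt:
  assumes k: "k > 0" and a: "a > 0"
  shows "x^2 * Hf k a x \<le> 2*a^2 * (sech (k*x+k*a)^2 + sech (k*x-k*a)^2)
     + 32/k^2 * (sech ((k/2)*x+(k/2)*a)^2 + sech ((k/2)*x-(k/2)*a)^2)"
proof -
  have "x^2 * Hf k a x \<le> x^2 * (sech (k*x+k*a)^2 + sech (k*x-k*a)^2)"
    using H_le by (intro mult_left_mono) auto
  then show ?thesis using P_moment[OF k, of x a] Q_moment[OF k, of x a] by (simp add: algebra_simps)
qed

lemma rel_from_abs:
  fixes X Y L D :: real
  assumes "Y > 0" "L > 0" "\<bar>X - L*Y\<bar> \<le> D*Y"
  shows "\<exists>r. X = L*Y*(1+r) \<and> \<bar>r\<bar> \<le> D/L"
proof (intro exI conjI)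
  show "X = L*Y*(1 + (X - L*Y)/(L*Y))" using assms by (simp add: field_simps)
  have "\<bar>(X - L*Y)/(L*Y)\<bar> = \<bar>X - L*Y\<bar>/(L*Y)" using assms by (simp add: abs_div)
  also have "\<dots> \<le> D*Y/(L*Y)" using assms by (intro divide_right_mono) auto
  also have "\<dots> = D/L" using assms by simp
  finally show "\<bar>(X - L*Y)/(L*Y)\<bar> \<le> D/L" .
qed

lemma rel_compose:
  fixes X Y Z r u :: real
  assumes "X = Y*(1+r)" "Y = Z*(1+u)" "abs u \<le> 1"
  shows "X = Z*(1+(r+u+r*u)) \<and> abs (r+u+r*u) \<le> 2*abs r + abs u"
proof
  show "X = Z*(1+(r+u+r*u))" using assms by (simp add: algebra_simps)
  have "abs (r*u) \<le> abs r" using assms(3) by (simp add: abs_mult mult_left_le)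
  then show "abs (r+u+r*u) \<le> 2*abs r + abs u" by linarith
qed



lemma tanh_E: "tanh (2*k*a) = (1 - exp (-4*k*a)) / (1 + exp (-4*k*a))" for k a :: real
  using tanh_real_altdef[of "2*k*a"] by (simp add: mult.assoc)

lemma VH_form:
  fixes E c T :: real
  assumes E: "0 < E" "E \<le> 1/100" and T: "T = (1 - E)/(1 + E)" and c: "c \<ge> 0"
  shows "\<exists>\<sigma>. 4 / T - 2 * ((1 - T^2) / T^2) * (4*c) = 4*(1+\<sigma>) \<and> \<bar>\<sigma>\<bar> \<le> 3*E + 9*c*E"
proof (intro exI conjI)
  have n: "1 - E > 0" "1 + E > 0" using E by auto
  have i1: "4 / T = 4 + 8*E/(1-E)" unfolding T using n by (simp add: field_simps)
  have i2: "(1 - T^2) / T^2 = 4*E/(1-E)^2" unfolding T using n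
    by (simp add: power_divide divide_simps) (simp add: power2_eq_square algebra_simps)
  have "4 / T - 2 * ((1 - T^2) / T^2) * (4*c) = 4*(1+(2*E/(1-E) - 8*c*E/(1-E)^2))"
    unfolding i1 i2 by (simp add: algebra_simps)
  then show "4 / T - 2 * ((1 - T^2) / T^2) * (4*c) = 4*(1+(2*E/(1-E) - 8*c*E/(1-E)^2))" .
  have a1: "2*E/(1-E) \<le> 3*E" using E n by (simp add: field_simps)
  have "(1-E)^2 \<ge> 8/9"
  proof -
    have "(1-E)^2 \<ge> (99/100)^2" using E by (intro power_mono) auto
    then show ?thesis by (simp add: power2_eq_square)
  qed
  then have "8/(1-E)^2 \<le> 9" using n by (simp add: divide_le_eq)
  then have "(c*E) * (8/(1-E)^2) \<le> (c*E) * 9" using c E by (intro mult_left_mono) auto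
  then have a2: "8*c*E/(1-E)^2 \<le> 9*c*E" by (simp add: algebra_simps)
  have "0 \<le> 2*E/(1-E)" "0 \<le> 8*c*E/(1-E)^2" using E c n by auto
  then show "\<bar>2*E/(1-E) - 8*c*E/(1-E)^2\<bar> \<le> 3*E + 9*c*E" using a1 a2 by linarith
qed

lemma VW_form:
  fixes E c T :: real
  assumes E: "0 < E" "E \<le> 1/100" and T: "T = (1 - E)/(1 + E)" and c: "c \<ge> 1"
  shows "\<exists>\<tau>. (1 - T^2) / T^3 * (8*c - 4*T) = 16*E*(2*c-1)*(1+\<tau>) \<and> 0 \<le> \<tau> \<and> \<tau> \<le> 9*E"
proof (intro exI conjI)
  have n: "1 - E > 0" "1 + E > 0" "2*c - 1 > 0" using E c by auto
  define \<tau> where "\<tau> = (1+E)/(1-E)^3 - 1 + 2*E/((1-E)^3*(2*c-1))"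
  have i2: "(1 - T^2) / T^3 = 4*E*(1+E)/(1-E)^3" unfolding T using n
    by (simp add: power_divide divide_simps) (simp add: power2_eq_square power3_eq_cube algebra_simps)
  have p3: "(1-E)^3 \<noteq> 0" using n by simp
  have "(1 - T^2) / T^3 * (8*c - 4*T) = 16*E*(2*c*(1+E) - (1-E))/(1-E)^3"
  proof -
    have h3: "8*c - 4*T = 4*(2*c*(1+E) - (1-E))/(1+E)" unfolding T using n by (simp add: field_simps)
    define d where "d = (1-E)^3"
    have d: "d \<noteq> 0" using p3 by (simp add: d_def)
    have g: "y \<noteq> 0 \<Longrightarrow> 4*E*y/d * (4*X/y) = 16*E*X/d" for y X :: real
      by (simp add: field_simps)
    have "4*E*(1+E)/d * (4*(2*c*(1+E) - (1-E))/(1+E)) = 16*E*(2*c*(1+E) - (1-E))/d"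
      using n by (intro g) auto
    then show ?thesis unfolding i2 h3 d_def by simp
  qed
  also have "\<dots> = 16*E*(2*c-1)*(1+\<tau>)"
  proof -
    define d where "d = (1-E)^3"
    have d: "d \<noteq> 0" "2*c-1 \<noteq> 0" using p3 n by (auto simp: d_def)
    have "16*E*(2*c*(1+E) - (1-E))/d = 16*E*(2*c-1)*((1+E)/d - 1 + 2*E/(d*(2*c-1)) + 1)"
      using d by (simp add: field_simps)
    then show ?thesis unfolding \<tau>_def d_def[symmetric] by simp
  qed
  finally show "(1 - T^2) / T^3 * (8*c - 4*T) = 16*E*(2*c-1)*(1+\<tau>)" .
  have c3: "(1-E)^3 \<ge> 2/3"
  proof -
    have "(1-E)^3 \<ge> (99/100)^3" using E by (intro power_mono) auto
    then show ?thesis by (simp add: power3_eq_cube)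
  qed
  have p: "(1-E)^3 > 0" using n by simp
  have b0: "(1+E) - (1-E)^3 = 4*E - E^2*(3 - E)" by (simp add: power3_eq_cube power2_eq_square algebra_simps)
  have "0 \<le> E^2*(3 - E)" using E by simp
  moreover have "E^2*(3-E) \<le> E * (3-E)" using E by (intro mult_right_mono) (auto simp: power2_eq_square)
  moreover have "E*(3-E) \<le> 4*E" using E by (simp add: algebra_simps)
  ultimately have b1: "(1+E) - (1-E)^3 \<le> 4*E" "0 \<le> (1+E) - (1-E)^3" unfolding b0 by linarith+
  have t1: "(1+E)/(1-E)^3 - 1 = ((1+E) - (1-E)^3)/(1-E)^3" using p by (simp add: field_simps)
  have t1b: "((1+E) - (1-E)^3)/(1-E)^3 \<le> 6*E"
  proof -
    have "6*E*(2/3) \<le> 6*E*(1-E)^3" using c3 E by (intro mult_left_mono) auto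
    then have "(1+E) - (1-E)^3 \<le> 6*E*(1-E)^3" using b1 by linarith
    then show ?thesis using p by (simp add: divide_le_eq)
  qed
  have t1c: "0 \<le> ((1+E) - (1-E)^3)/(1-E)^3" using b1 p by simp
  have t2: "2*E/((1-E)^3*(2*c-1)) \<le> 3*E"
  proof -
    have "(2/3)*1 \<le> (1-E)^3*(2*c-1)" using c3 c E by (intro mult_mono) auto
    then have "3*E*(2/3) \<le> 3*E*((1-E)^3*(2*c-1))" using E by (intro mult_left_mono) auto
    then have "2*E \<le> 3*E*((1-E)^3*(2*c-1))" by simp
    moreover have "(1-E)^3*(2*c-1) > 0" using p n by simp
    ultimately show ?thesis by (simp add: divide_le_eq)
  qed
  have t2b: "0 \<le> 2*E/((1-E)^3*(2*c-1))" using E p n by simp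
  show "0 \<le> \<tau>" "\<tau> \<le> 9*E" unfolding \<tau>_def using t1 t1b t1c t2 t2b by linarith+
qed

lemma cont_sech_lin: "continuous_on UNIV (\<lambda>x. sech (k*x+\<beta>)^2)" for k \<beta> :: real
  unfolding sech_def by (intro continuous_intros) (auto simp: cosh_nz)

lemma cont_Hf: "continuous_on UNIV (Hf k a)"
  unfolding Hf_def[abs_def] sech_def by (intro continuous_intros) (auto simp: cosh_nz)

lemma cont_W: "continuous_on UNIV (\<lambda>x. sech (k*x+k*a)^2 * sech (k*x-k*a)^2)" for k a :: real
  unfolding sech_def by (intro continuous_intros) (auto simp: cosh_nz)

lemma meas_cont: "continuous_on UNIV f \<Longrightarrow> f \<in> borel_measurable lborel" for f :: "real \<Rightarrow> real"
  using borel_measurable_continuous_onI by (simp add: measurable_lborel1)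

lemma core_H:
  fixes f :: "real \<Rightarrow> real" and k a \<delta> :: real
  assumes k: "k > 0" and a: "0 < a" "a \<le> 1/2" and E: "exp (-4*k*a) \<le> 1/100"
    and cE: "3*exp (-4*k*a) + 9*(k*a)*exp (-4*k*a) \<le> 1/2"
    and fm: "f \<in> borel_measurable borel" and d: "\<delta> \<ge> 0"
    and fb: "\<And>x. \<bar>f x - (1-a^2)\<bar> \<le> x^2 + a^2 + \<delta>"
  shows "\<exists>r. (\<integral>x. f x * Hf k a x \<partial>lborel) = 4/k*(1-a^2)*(1+r) \<and>
     \<bar>r\<bar> \<le> 3*(5*a^2 + 128/k^2 + \<delta>) + 3*exp (-4*k*a) + 9*(k*a)*exp (-4*k*a)"
proof -
  define E where "E = exp (-4*k*a)"
  define T where "T = tanh (2*k*a)"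
  define D where "D = 5*a^2 + 128/k^2 + \<delta>"
  define L where "L = 1 - a^2"
  have L: "L \<ge> 3/4" "L > 0"
  proof -
    have "a^2 \<le> (1/2)^2" using a by (intro power_mono) auto
    then show "L \<ge> 3/4" "L > 0" unfolding L_def by (auto simp: power2_eq_square)
  qed
  have ka: "k*a > 0" using k a by simp
  have iH: "integrable lborel (Hf k a)" using int_H(1)[OF k a(1)] unfolding Hf_def[abs_def] .
  have vH: "(\<integral>x. Hf k a x \<partial>lborel) = (4 / T - 2 * ((1 - T^2) / T^2) * (4*k*a)) / k"
    using int_H(2)[OF k a(1)] unfolding Hf_def[abs_def] T_def .
  obtain \<sigma> where \<sigma>: "4 / T - 2 * ((1 - T^2) / T^2) * (4*(k*a)) = 4*(1+\<sigma>)" "\<bar>\<sigma>\<bar> \<le> 3*E + 9*(k*a)*E"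
    using VH_form[of E T "k*a"] E ka unfolding E_def T_def by (auto simp: tanh_E)
  have s1: "\<bar>\<sigma>\<bar> \<le> 1/2" using \<sigma>(2) cE unfolding E_def by linarith
  have IH: "(\<integral>x. Hf k a x \<partial>lborel) = 4/k * (1+\<sigma>)" using vH \<sigma>(1) by (simp add: mult.assoc)
  have IHlow: "(\<integral>x. Hf k a x \<partial>lborel) \<ge> 2/k"
  proof -
    have "1 + \<sigma> \<ge> 1/2" using s1 by linarith
    then have "4/k * (1/2) \<le> 4/k * (1+\<sigma>)" using k by (intro mult_left_mono) auto
    then show ?thesis unfolding IH by simp
  qed
  have IHpos: "(\<integral>x. Hf k a x \<partial>lborel) > 0" using IHlow k divide_pos_pos[of 2 k] by linarith
  define R where "R x = 2*a^2 * (sech (k*x+k*a)^2 + sech (k*x-k*a)^2)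
     + 32/k^2 * (sech ((k/2)*x+(k/2)*a)^2 + sech ((k/2)*x-(k/2)*a)^2)" for x
  have k2: "k/2 > 0" using k by simp
  have iR: "integrable lborel R" unfolding R_def
    using int_sech2[OF k, of "k*a"] int_sech2_m[OF k, of "k*a"] int_sech2[OF k2, of "(k/2)*a"] int_sech2_m[OF k2, of "(k/2)*a"]
    by auto
  have vR: "(\<integral>x. R x \<partial>lborel) = 8*a^2/k + 256/k^3"
  proof -
    have "(\<integral>x. R x \<partial>lborel) = 2*a^2 * (2/k + 2/k) + 32/k^2 * (2/(k/2) + 2/(k/2))" unfolding R_def
      using int_sech2[OF k, of "k*a"] int_sech2_m[OF k, of "k*a"] int_sech2[OF k2, of "(k/2)*a"] int_sech2_m[OF k2, of "(k/2)*a"]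
      by (simp add: integral_add)
    also have "\<dots> = 8*a^2/k + 256/k^3" using k by (simp add: field_simps power3_eq_cube power2_eq_square)
    finally show ?thesis .
  qed
  have mH: "Hf k a \<in> borel_measurable lborel" by (rule meas_cont[OF cont_Hf])
  have i2: "integrable lborel (\<lambda>x. x^2 * Hf k a x)"
    by (rule Bochner_Integration.integrable_bound[OF iR])
      (use mH H_pt[OF k a(1)] H_nonneg[OF k a(1)] in \<open>auto simp: R_def intro!: borel_measurable_times AE_I2\<close>)
  have m2: "(\<integral>x. x^2 * Hf k a x \<partial>lborel) \<le> 8*a^2/k + 256/k^3"
    unfolding vR[symmetric] by (rule integral_mono[OF i2 iR]) (use H_pt[OF k a(1)] in \<open>auto simp: R_def\<close>)
  have ig: "integrable lborel (\<lambda>x. (x^2 + a^2 + \<delta>) * Hf k a x)"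
    using i2 iH by (auto simp: distrib_right)
  have vg: "(\<integral>x. (x^2 + a^2 + \<delta>) * Hf k a x \<partial>lborel) = (\<integral>x. x^2 * Hf k a x \<partial>lborel) + (a^2 + \<delta>) * (\<integral>x. Hf k a x \<partial>lborel)"
  proof -
    have "(\<lambda>x. (x^2 + a^2 + \<delta>) * Hf k a x) = (\<lambda>x. x^2 * Hf k a x + (a^2 + \<delta>) * Hf k a x)"
      by (auto simp: algebra_simps)
    then show ?thesis using i2 iH by simp
  qed
  have gD: "(\<integral>x. (x^2 + a^2 + \<delta>) * Hf k a x \<partial>lborel) \<le> D * (\<integral>x. Hf k a x \<partial>lborel)"
  proof -
    have "4*a^2 * (2/k) \<le> 4*a^2 * (\<integral>x. Hf k a x \<partial>lborel)"
      using IHlow k by (intro mult_left_mono) auto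
    then have "8*a^2/k \<le> 4*a^2 * (\<integral>x. Hf k a x \<partial>lborel)" by simp
    moreover have "256/k^3 \<le> 128/k^2 * (\<integral>x. Hf k a x \<partial>lborel)"
    proof -
      have "128/k^2 * (2/k) \<le> 128/k^2 * (\<integral>x. Hf k a x \<partial>lborel)" using IHlow k by (intro mult_left_mono) auto
      then show ?thesis using k by (simp add: power3_eq_cube power2_eq_square)
    qed
    ultimately show ?thesis unfolding vg D_def using m2 by (simp add: algebra_simps)
  qed
  have w: "\<bar>(\<integral>x. f x * Hf k a x \<partial>lborel) - L * (\<integral>x. Hf k a x \<partial>lborel)\<bar> \<le> D * (\<integral>x. Hf k a x \<partial>lborel)"
  proof -
    have mHb: "Hf k a \<in> borel_measurable borel" using mH by (simp add: measurable_lborel1)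
    have "\<bar>(\<integral>x. f x * Hf k a x \<partial>lborel) - L * (\<integral>x. Hf k a x \<partial>lborel)\<bar> \<le> (\<integral>x. (x^2 + a^2 + \<delta>) * Hf k a x \<partial>lborel)"
      unfolding L_def by (rule weighted(2)[OF iH H_nonneg[OF k a(1)] fm mHb fb ig])
    then show ?thesis using gD by linarith
  qed
  obtain \<rho> where \<rho>: "(\<integral>x. f x * Hf k a x \<partial>lborel) = L * (\<integral>x. Hf k a x \<partial>lborel) * (1+\<rho>)" "\<bar>\<rho>\<bar> \<le> D/L"
    using rel_from_abs[OF IHpos L(2) w] by auto
  have rD: "\<bar>\<rho>\<bar> \<le> (4/3)*D"
  proof -
    have D0: "D \<ge> 0" unfolding D_def using d by simp
    have "D/L \<le> D/(3/4)" using L D0 by (intro divide_left_mono) auto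
    moreover have "D/(3/4) = (4/3)*D" by simp
    ultimately show ?thesis using \<rho>(2) by (metis order_trans)
  qed
  have "L * (\<integral>x. Hf k a x \<partial>lborel) = (4/k*L) * (1+\<sigma>)" using IH by simp
  from rel_compose[OF \<rho>(1) this] s1
  have "(\<integral>x. f x * Hf k a x \<partial>lborel) = 4/k*L*(1+(\<rho>+\<sigma>+\<rho>*\<sigma>)) \<and> \<bar>\<rho>+\<sigma>+\<rho>*\<sigma>\<bar> \<le> 2*\<bar>\<rho>\<bar> + \<bar>\<sigma>\<bar>" by auto
  moreover have "2*\<bar>\<rho>\<bar> + \<bar>\<sigma>\<bar> \<le> 3*D + 3*E + 9*(k*a)*E" using rD \<sigma>(2) D_def d by auto
  ultimately show ?thesis unfolding L_def D_def E_def by (intro exI[of _ "\<rho>+\<sigma>+\<rho>*\<sigma>"]) auto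
qed

lemma core_W:
  fixes f :: "real \<Rightarrow> real" and k a \<delta> :: real
  assumes k: "k > 0" and a: "0 < a" "a \<le> 1/2" and c1: "k*a \<ge> 1" and E: "exp (-4*k*a) \<le> 1/100"
    and fm: "f \<in> borel_measurable borel" and d: "\<delta> \<ge> 0"
    and fb: "\<And>x. \<bar>f x - (1-a^2)\<bar> \<le> x^2 + a^2 + \<delta>"
  shows "\<exists>r. (\<integral>x. f x * (sech (k*x+k*a)^2 * sech (k*x-k*a)^2) \<partial>lborel)
        = 1/k*(1-a^2)*(16*exp (-4*k*a)*(2*(k*a)-1))*(1+r) \<and>
     \<bar>r\<bar> \<le> 3*(10*a^2 + 8/k^2 + \<delta>) + 9*exp (-4*k*a)"
proof -
  define E where "E = exp (-4*k*a)"
  define T where "T = tanh (2*k*a)"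
  define D where "D = 10*a^2 + 8/k^2 + \<delta>"
  define L where "L = 1 - a^2"
  define W where "W x = sech (k*x+k*a)^2 * sech (k*x-k*a)^2" for x
  have L: "L \<ge> 3/4" "L > 0"
  proof -
    have "a^2 \<le> (1/2)^2" using a by (intro power_mono) auto
    then show "L \<ge> 3/4" "L > 0" unfolding L_def by (auto simp: power2_eq_square)
  qed
  have ka: "k*a > 0" using k a by simp
  have E0: "E > 0" unfolding E_def by simp
  have iW: "integrable lborel W" using int_W(1)[OF k a(1)] unfolding W_def[abs_def] .
  have vW: "(\<integral>x. W x \<partial>lborel) = (1 - T^2) / T^3 * (8*k*a - 4*T) / k"
    using int_W(2)[OF k a(1)] unfolding W_def[abs_def] T_def .
  obtain \<tau> where \<tau>: "(1 - T^2) / T^3 * (8*(k*a) - 4*T) = 16*E*(2*(k*a)-1)*(1+\<tau>)" "0 \<le> \<tau>" "\<tau> \<le> 9*E"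
    using VW_form[of E T "k*a"] E c1 unfolding E_def T_def by (auto simp: tanh_E)
  have s1: "\<bar>\<tau>\<bar> \<le> 1" using \<tau> E unfolding E_def by auto
  have "(\<integral>x. W x \<partial>lborel) = ((1 - T^2) / T^3 * (8*(k*a) - 4*T)) / k" using vW by (simp add: mult.assoc)
  then have IW: "(\<integral>x. W x \<partial>lborel) = 1/k * (16*E*(2*(k*a)-1)) * (1+\<tau>)" unfolding \<tau>(1) by simp
  have IWlow: "(\<integral>x. W x \<partial>lborel) \<ge> 16*E*(k*a)/k"
  proof -
    have "16*E*(k*a) \<le> 16*E*(2*(k*a)-1)" using c1 E0 by (intro mult_left_mono) (auto simp: mult.commute)
    also have "\<dots> \<le> 16*E*(2*(k*a)-1)*(1+\<tau>)"
    proof -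
      have "0 \<le> 16*E*(2*(k*a)-1)" using c1 E0 by auto
      then have "16*E*(2*(k*a)-1)*1 \<le> 16*E*(2*(k*a)-1)*(1+\<tau>)" using \<tau>(2) by (intro mult_left_mono) auto
      then show ?thesis by simp
    qed
    finally have "16*E*(k*a)/k \<le> 16*E*(2*(k*a)-1)*(1+\<tau>)/k" using k by (intro divide_right_mono) auto
    then show ?thesis unfolding IW by simp
  qed
  have IWlow2: "(\<integral>x. W x \<partial>lborel) \<ge> 16*E/k"
  proof -
    have "16*E/k \<le> 16*E*(k*a)/k" using c1 E0 k by (intro divide_right_mono) (auto simp: mult_le_cancel_left1)
    then show ?thesis using IWlow by linarith
  qed
  have IWpos: "(\<integral>x. W x \<partial>lborel) > 0" using IWlow2 k E0 divide_pos_pos[of "16*E" k] by linarith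
  define R where "R x = a^2 * W x + 32 * E * (a^2 + 1/k^2) * (sech (k*x+k*a)^2 + sech (k*x-k*a)^2)" for x
  have iR: "integrable lborel R" unfolding R_def
    using iW int_sech2[OF k, of "k*a"] int_sech2_m[OF k, of "k*a"] by auto
  have vR: "(\<integral>x. R x \<partial>lborel) = a^2 * (\<integral>x. W x \<partial>lborel) + 128 * E * (a^2 + 1/k^2) / k"
  proof -
    have "(\<integral>x. R x \<partial>lborel) = a^2 * (\<integral>x. W x \<partial>lborel) + 32 * E * (a^2 + 1/k^2) * (2/k + 2/k)" unfolding R_def
      using iW int_sech2[OF k, of "k*a"] int_sech2_m[OF k, of "k*a"]
      by (simp add: integral_add)
    then show ?thesis by simp
  qed
  have Wpt: "x^2 * W x \<le> R x" for x using W_pt[OF k a(1), of x] unfolding R_def W_def E_def by simp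
  have Wnn: "0 \<le> W x" for x unfolding W_def by simp
  have mW: "W \<in> borel_measurable lborel" unfolding W_def by (rule meas_cont[OF cont_W])
  have i2: "integrable lborel (\<lambda>x. x^2 * W x)"
    by (rule Bochner_Integration.integrable_bound[OF iR])
      (use mW Wpt Wnn in \<open>auto intro!: borel_measurable_times AE_I2 order_trans[OF _ abs_ge_self]\<close>)
  have m2: "(\<integral>x. x^2 * W x \<partial>lborel) \<le> a^2 * (\<integral>x. W x \<partial>lborel) + 128 * E * (a^2 + 1/k^2) / k"
    unfolding vR[symmetric] by (rule integral_mono[OF i2 iR]) (use Wpt in auto)
  have ig: "integrable lborel (\<lambda>x. (x^2 + a^2 + \<delta>) * W x)"
    using i2 iW by (auto simp: distrib_right)
  have vg: "(\<integral>x. (x^2 + a^2 + \<delta>) * W x \<partial>lborel) = (\<integral>x. x^2 * W x \<partial>lborel) + (a^2 + \<delta>) * (\<integral>x. W x \<partial>lborel)"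
  proof -
    have "(\<lambda>x. (x^2 + a^2 + \<delta>) * W x) = (\<lambda>x. x^2 * W x + (a^2 + \<delta>) * W x)"
      by (auto simp: algebra_simps)
    then show ?thesis using i2 iW by simp
  qed
  have gD: "(\<integral>x. (x^2 + a^2 + \<delta>) * W x \<partial>lborel) \<le> D * (\<integral>x. W x \<partial>lborel)"
  proof -
    have "128 * E * (a^2 + 1/k^2) / k = 8 * (a^2 + 1/k^2) * (16*E/k)" by simp
    also have "\<dots> \<le> 8 * (a^2 + 1/k^2) * (\<integral>x. W x \<partial>lborel)" using IWlow2 by (intro mult_left_mono) auto
    finally have "128 * E * (a^2 + 1/k^2) / k \<le> (8*a^2 + 8/k^2) * (\<integral>x. W x \<partial>lborel)" by (simp add: algebra_simps)
    then show ?thesis unfolding vg D_def using m2 by (simp add: algebra_simps)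
  qed
  have w: "\<bar>(\<integral>x. f x * W x \<partial>lborel) - L * (\<integral>x. W x \<partial>lborel)\<bar> \<le> D * (\<integral>x. W x \<partial>lborel)"
  proof -
    have mWb: "W \<in> borel_measurable borel" using mW by (simp add: measurable_lborel1)
    have "\<bar>(\<integral>x. f x * W x \<partial>lborel) - L * (\<integral>x. W x \<partial>lborel)\<bar> \<le> (\<integral>x. (x^2 + a^2 + \<delta>) * W x \<partial>lborel)"
      unfolding L_def by (rule weighted(2)[OF iW Wnn fm mWb fb ig])
    then show ?thesis using gD by linarith
  qed
  obtain \<rho> where \<rho>: "(\<integral>x. f x * W x \<partial>lborel) = L * (\<integral>x. W x \<partial>lborel) * (1+\<rho>)" "\<bar>\<rho>\<bar> \<le> D/L"
    using rel_from_abs[OF IWpos L(2) w] by auto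
  have rD: "\<bar>\<rho>\<bar> \<le> (4/3)*D"
  proof -
    have D0: "D \<ge> 0" unfolding D_def using d by simp
    have "D/L \<le> D/(3/4)" using L D0 by (intro divide_left_mono) auto
    moreover have "D/(3/4) = (4/3)*D" by simp
    ultimately show ?thesis using \<rho>(2) by (metis order_trans)
  qed
  have "L * (\<integral>x. W x \<partial>lborel) = (1/k*L*(16*E*(2*(k*a)-1))) * (1+\<tau>)" using IW by simp
  from rel_compose[OF \<rho>(1) this] s1
  have "(\<integral>x. f x * W x \<partial>lborel) = 1/k*L*(16*E*(2*(k*a)-1))*(1+(\<rho>+\<tau>+\<rho>*\<tau>)) \<and> \<bar>\<rho>+\<tau>+\<rho>*\<tau>\<bar> \<le> 2*\<bar>\<rho>\<bar> + \<bar>\<tau>\<bar>" by auto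
  moreover have "2*\<bar>\<rho>\<bar> + \<bar>\<tau>\<bar> \<le> 3*D + 9*E" using rD \<tau> D_def d by auto
  ultimately show ?thesis unfolding L_def D_def E_def W_def by (intro exI[of _ "\<rho>+\<tau>+\<rho>*\<tau>"]) auto
qed

lemma eta0_01: "0 \<le> eta0 x" "eta0 x \<le> 1"
  by (auto simp: eta0_def abs_square_le_1 less_imp_le)

lemma eta0_bound: "\<bar>eta0 x ^2 - (1 - a^2)\<bar> \<le> x^2 + a^2" for a :: real
proof -
  show "\<bar>eta0 x ^2 - (1 - a^2)\<bar> \<le> x^2 + a^2"
  proof (cases "\<bar>x\<bar> < 1")
    case True
    then have "x^2 \<le> 1" by (simp add: abs_square_le_1 less_imp_le)
    then have "eta0 x ^2 = 1 - x^2" using True by (simp add: eta0_def)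
    then show ?thesis by (simp add: abs_le_iff)
  next
    case False
    then have "1 \<le> x^2" using power_mono[of 1 "\<bar>x\<bar>" 2] by simp
    moreover have "eta0 x = 0" using False by (simp add: eta0_def)
    moreover have "1 \<le> 2*a^2 + x^2" using \<open>1 \<le> x^2\<close> zero_le_power2[of a] by linarith
    ultimately show ?thesis unfolding abs_le_iff by simp
  qed
qed

lemma alg_final:
  fixes \<epsilon> B bd S L r1 r2 b P ad Bd a E :: real
  assumes "\<epsilon> \<noteq> 0" "B \<noteq> 0"
  shows "(1/2)*bd*S*(4/(B/\<epsilon>)*L*(1+r1)) - (1/\<epsilon>)*b*P*(B*ad + Bd*a)*(1/(B/\<epsilon>)*L*(16*E*(2*((B/\<epsilon>)*a)-1))*(1+r2))
     = 2*\<epsilon>*bd*S/B*L*(1+r1) - 16*b*P*(ad + Bd*a/B)*L*E*(2*B*a/\<epsilon> - 1)*(1+r2)"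
proof -
  have t1: "(1/2)*bd*S*(4/(B/\<epsilon>)*L*(1+r1)) = 2*\<epsilon>*bd*S/B*L*(1+r1)" using assms by simp
  have t2: "(1/\<epsilon>)*b*P*(B*ad + Bd*a)*(1/(B/\<epsilon>)*L*(16*E*(2*((B/\<epsilon>)*a)-1))*(1+r2)) = 16*b*P*(ad + Bd*a/B)*L*E*(2*B*a/\<epsilon> - 1)*(1+r2)"
  proof -
    have f: "(1/\<epsilon>)*(B*ad + Bd*a)*(1/(B/\<epsilon>)) = ad + Bd*a/B" using assms by (simp add: field_simps)
    have x: "2*((B/\<epsilon>)*a) = 2*B*a/\<epsilon>" by simp
    have "(1/\<epsilon>)*b*P*(B*ad + Bd*a)*(1/(B/\<epsilon>)*L*(16*E*(2*((B/\<epsilon>)*a)-1))*(1+r2))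
      = 16*b*P*((1/\<epsilon>)*(B*ad + Bd*a)*(1/(B/\<epsilon>)))*L*E*(2*((B/\<epsilon>)*a)-1)*(1+r2)"
      by (simp only: mult.assoc mult.commute mult.left_commute)
    then show ?thesis unfolding f x .
  qed
  show ?thesis using t1 t2 by simp
qed

lemma fixed:
  fixes \<eta> :: "real \<Rightarrow> real \<Rightarrow> real" and \<epsilon> a b ad bd Bd C C1 \<beta> :: real
  assumes e: "0 < \<epsilon>" "\<epsilon> < 1"
    and hC: "C > 0" "\<forall>x. \<bar>\<eta> \<epsilon> x - eta0 x\<bar> \<le> C * \<epsilon> powr (1/3)" "C * \<epsilon> powr (1/3) \<le> 1"
    and hc: "continuous_on UNIV (\<eta> \<epsilon>)"
    and a: "0 < a" "a \<le> 1/2" "a \<le> C1 * \<epsilon> powr (1/6)"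
    and b: "\<bar>b\<bar> \<le> \<beta>" "\<beta> < 1"
    and ex: "exp (-4 * Bpar a b * a / \<epsilon>) \<le> (\<epsilon> powr (1/3) / 100)^2"
  shows "\<exists>r1 r2. \<bar>r1\<bar> \<le> (30*C1^2 + 1024*(1/(1-\<beta>^2)) + 9*C + 12) * \<epsilon> powr (1/3)
      \<and> \<bar>r2\<bar> \<le> (30*C1^2 + 1024*(1/(1-\<beta>^2)) + 9*C + 12) * \<epsilon> powr (1/3) \<and>
      K_overlap \<eta> \<epsilon> a b ad bd Bd =
             2 * \<epsilon> * bd * sqrt (1 - b^2) / Bpar a b * (1 - a^2) * (1 + r1)
           - 16 * b * (1 - b^2) powr (3/2)
               * (ad + Bd * a / Bpar a b) * (1 - a^2)
               * exp (-4 * Bpar a b * a / \<epsilon>)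
               * (2 * Bpar a b * a / \<epsilon> - 1) * (1 + r2)"
proof -
  define tt where "tt = \<epsilon> powr (1/3)"
  define B where "B = Bpar a b"
  define Q where "Q = 1/(1-\<beta>^2)"
  define k where "k = B/\<epsilon>"
  define E where "E = exp (-4*k*a)"
  define \<mu> where "\<mu> = tt/100"
  define \<delta> where "\<delta> = 3*C*tt"
  have tt0: "tt > 0" unfolding tt_def using e by simp
  have tt1: "tt \<le> 1" unfolding tt_def using e by (intro powr_le1) auto
  have e2: "\<epsilon>^2 \<le> tt"
  proof -
    have "\<epsilon> powr 2 \<le> \<epsilon> powr (1/3)" using e by (intro powr_mono') auto
    then show ?thesis unfolding tt_def using e by (simp add: powr_realpow)
  qed
  have a2: "a^2 \<le> C1^2 * tt"
  proof -
    have "a^2 \<le> (C1 * \<epsilon> powr (1/6))^2" using a by (intro power_mono) auto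
    also have "\<dots> = C1^2 * (\<epsilon> powr (1/6) * \<epsilon> powr (1/6))" by (simp add: power2_eq_square)
    also have "\<epsilon> powr (1/6) * \<epsilon> powr (1/6) = tt" unfolding tt_def by (simp add: powr_add[symmetric])
    finally show ?thesis .
  qed
  have \<beta>0: "\<beta> \<ge> 0" using b by linarith
  have b2: "b^2 \<le> \<beta>^2" using b by (metis abs_ge_zero power2_abs power_mono)
  have \<beta>2: "\<beta>^2 < 1" using power_strict_mono[of \<beta> 1 2] b \<beta>0 by simp
  have Q0: "Q > 0" unfolding Q_def using \<beta>2 by simp
  have aq: "a^2 \<le> 1/4"
  proof -
    have "a^2 \<le> (1/2)^2" using a by (intro power_mono) auto
    then show ?thesis by (simp add: power2_eq_square)
  qed
  have BB: "B^2 = (1 - a^2) * (1 - b^2) / 2" unfolding B_def Bpar_def using aq b2 \<beta>2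
    by (simp add: power_mult_distrib real_sqrt_pow2 power_divide)
  have Bpos: "B > 0" unfolding B_def Bpar_def using aq b2 \<beta>2 by auto
  have BBlow: "B^2 \<ge> (3/8) * (1 - \<beta>^2)"
  proof -
    have "(3/4) * (1 - \<beta>^2) \<le> (1 - a^2) * (1 - b^2)" using aq b2 \<beta>2 by (intro mult_mono) auto
    then show ?thesis unfolding BB by simp
  qed
  have k0: "k > 0" unfolding k_def using Bpos e by simp
  have ik: "1/k^2 \<le> (8/3) * Q * tt"
  proof -
    have "1/k^2 = \<epsilon>^2 / B^2" unfolding k_def using e Bpos by (simp add: power_divide)
    also have "\<dots> \<le> \<epsilon>^2 / ((3/8) * (1 - \<beta>^2))" using BBlow \<beta>2 Bpos by (intro divide_left_mono) auto
    also have "\<dots> = (8/3) * Q * \<epsilon>^2" unfolding Q_def by simp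
    also have "\<dots> \<le> (8/3) * Q * tt" using e2 Q0 by (intro mult_left_mono) auto
    finally show ?thesis .
  qed
  have Eeq: "exp (-4 * Bpar a b * a / \<epsilon>) = E" unfolding E_def k_def B_def by (simp add: algebra_simps)
  have Emu: "E \<le> \<mu>^2" using ex unfolding Eeq \<mu>_def tt_def .
  have mu: "\<mu> > 0" "\<mu> \<le> 1/100" unfolding \<mu>_def using tt0 tt1 by auto
  define c where "c = k*a"
  have c0: "c > 0" unfolding c_def using k0 a by simp
  have Ec: "E = exp (-2*c)^2"
  proof -
    have "exp (-2*c)^2 = exp (real 2 * (-2*c))" by (rule exp_of_nat_mult[symmetric])
    moreover have "real 2 * (-2*c) = -4*k*a" unfolding c_def by simp
    ultimately show ?thesis unfolding E_def by simp
  qed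
  have e2c: "exp (-2*c) \<le> \<mu>"
  proof -
    have "exp (-2*c)^2 \<le> \<mu>^2" using Emu Ec by simp
    from power2_le_imp_le[OF this] mu show ?thesis by simp
  qed
  have Emu2: "E \<le> \<mu>"
  proof -
    have "exp (-2*c) \<le> 1" using c0 by simp
    then have "exp (-2*c) * exp (-2*c) \<le> 1 * exp (-2*c)" by (intro mult_right_mono) auto
    then have "exp (-2*c)^2 \<le> exp (-2*c)" by (simp add: power2_eq_square)
    then show ?thesis unfolding Ec using e2c by linarith
  qed
  have c1: "c \<ge> 1"
  proof (rule ccontr)
    assume "\<not> c \<ge> 1"
    then have "exp (-4) < E" unfolding E_def c_def by (simp add: algebra_simps)
    moreover have "exp (4::real) \<le> 81"
    proof -
      have "exp (4::real) = exp 1 ^ 4" using exp_of_nat_mult[of 4 1] by simp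
      also have "\<dots> \<le> 3 ^ 4" using exp_le by (intro power_mono) auto
      finally show ?thesis by simp
    qed
    moreover have "exp (-4::real) = 1 / exp 4" by (simp add: exp_minus field_simps)
    moreover have "1/81 \<le> 1 / exp (4::real)"
      using \<open>exp 4 \<le> 81\<close> by (intro divide_left_mono) auto
    ultimately have "1/81 < E" by linarith
    then show False using Emu2 mu by linarith
  qed
  have cE: "c * E \<le> \<mu>"
  proof -
    have "c \<le> exp (2*c)" using exp_ge_add_one_self[of "2*c"] c0 by linarith
    then have "c * exp (-2*c) \<le> 1" by (simp add: exp_minus divide_simps)
    then have "c * exp (-2*c) * exp (-2*c) \<le> 1 * exp (-2*c)" by (intro mult_right_mono) auto
    then have "c * E \<le> exp (-2*c)" unfolding Ec by (simp add: power2_eq_square mult.assoc)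
    then show ?thesis using e2c by linarith
  qed
  have E100: "exp (-4*k*a) \<le> 1/100" using Emu2 mu unfolding E_def by linarith
  have cond: "3*exp (-4*k*a) + 9*(k*a)*exp (-4*k*a) \<le> 1/2" using Emu2 cE mu unfolding E_def c_def by linarith
  define f where "f x = (\<eta> \<epsilon> x)^2" for x
  have fm: "f \<in> borel_measurable borel" unfolding f_def
    by (rule borel_measurable_continuous_onI) (intro continuous_intros hc)
  have d0: "\<delta> \<ge> 0" unfolding \<delta>_def using hC tt0 by simp
  have fb: "\<bar>f x - (1-a^2)\<bar> \<le> x^2 + a^2 + \<delta>" for x
  proof -
    have h: "\<bar>\<eta> \<epsilon> x - eta0 x\<bar> \<le> C*tt" using hC unfolding tt_def by auto
    have "\<bar>f x - eta0 x^2\<bar> = \<bar>\<eta> \<epsilon> x - eta0 x\<bar> * \<bar>\<eta> \<epsilon> x + eta0 x\<bar>"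
      unfolding f_def by (simp add: abs_mult[symmetric] power2_eq_square algebra_simps)
    also have "\<bar>\<eta> \<epsilon> x + eta0 x\<bar> \<le> 3"
    proof -
      have "\<bar>\<eta> \<epsilon> x + eta0 x\<bar> \<le> \<bar>\<eta> \<epsilon> x - eta0 x\<bar> + 2 * \<bar>eta0 x\<bar>" by linarith
      then show ?thesis using h hC(3) eta0_01[of x] unfolding tt_def by linarith
    qed
    then have "\<bar>\<eta> \<epsilon> x - eta0 x\<bar> * \<bar>\<eta> \<epsilon> x + eta0 x\<bar> \<le> C*tt * 3" using h by (intro mult_mono) auto
    finally have "\<bar>f x - eta0 x^2\<bar> \<le> \<delta>" unfolding \<delta>_def by simp
    then show ?thesis using eta0_bound[of x a] by linarith
  qed
  obtain r1 where r1: "(\<integral>x. f x * Hf k a x \<partial>lborel) = 4/k*(1-a^2)*(1+r1)"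
     "\<bar>r1\<bar> \<le> 3*(5*a^2 + 128/k^2 + \<delta>) + 3*exp (-4*k*a) + 9*(k*a)*exp (-4*k*a)"
    using core_H[OF k0 a(1,2) E100 cond fm d0 fb] by blast
  obtain r2 where r2: "(\<integral>x. f x * (sech (k*x+k*a)^2 * sech (k*x-k*a)^2) \<partial>lborel)
        = 1/k*(1-a^2)*(16*exp (-4*k*a)*(2*(k*a)-1))*(1+r2)"
     "\<bar>r2\<bar> \<le> 3*(10*a^2 + 8/k^2 + \<delta>) + 9*exp (-4*k*a)"
    using core_W[OF k0 a(1,2) c1[unfolded c_def] E100 fm d0 fb] by blast
  define K where "K = 30*C1^2 + 1024*Q + 9*C + 12"
  have Ks: "K * tt = 30*(C1^2*tt) + 1024*(Q*tt) + 9*(C*tt) + 12*tt" unfolding K_def by (simp add: algebra_simps)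
  have nn: "0 \<le> C1^2*tt" "0 \<le> Q*tt" "0 \<le> C*tt" using tt0 Q0 hC by auto
  have ik': "128/k^2 \<le> 128 * ((8/3) * Q * tt)" "8/k^2 \<le> 8 * ((8/3) * Q * tt)"
    using mult_left_mono[OF ik, of 128] mult_left_mono[OF ik, of 8] by simp_all
  have mu': "\<mu> \<le> tt" unfolding \<mu>_def using tt0 by simp
  have R1: "\<bar>r1\<bar> \<le> K * tt"
  proof -
    have r1': "\<bar>r1\<bar> \<le> 15*a^2 + 3*(128/k^2) + 3*\<delta> + 3*E + 9*(c*E)"
      using r1(2) unfolding E_def c_def by (simp add: mult.assoc)
    have "15*a^2 \<le> 15*(C1^2*tt)" using a2 by simp
    moreover have "3*(128/k^2) \<le> 1024*(Q*tt)" using ik'(1) by simp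
    moreover have "3*\<delta> = 9*(C*tt)" unfolding \<delta>_def by simp
    ultimately show ?thesis using r1' Ks nn mu' Emu2 cE by linarith
  qed
  have R2: "\<bar>r2\<bar> \<le> K * tt"
  proof -
    have r2': "\<bar>r2\<bar> \<le> 30*a^2 + 3*(8/k^2) + 3*\<delta> + 9*E"
      using r2(2) unfolding E_def by simp
    have "30*a^2 \<le> 30*(C1^2*tt)" using a2 by simp
    moreover have "3*(8/k^2) \<le> 1024*(Q*tt)" using ik'(2) nn by simp
    moreover have "3*\<delta> = 9*(C*tt)" unfolding \<delta>_def by simp
    ultimately show ?thesis using r2' Ks nn mu' Emu2 tt0 by linarith
  qed
  have zp: "B*(x+a)/\<epsilon> = k*x+k*a" and zm: "B*(x-a)/\<epsilon> = k*x-k*a" for x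
    unfolding k_def using e by (simp_all add: field_simps)
  have I1: "(\<integral>x. (\<eta> \<epsilon> x)^2 * (tanh (B*(x+a)/\<epsilon>) * (sech (B*(x-a)/\<epsilon>))^2 - tanh (B*(x-a)/\<epsilon>) * (sech (B*(x+a)/\<epsilon>))^2) \<partial>lborel)
      = 4/k*(1-a^2)*(1+r1)"
    unfolding zp zm r1(1)[symmetric] f_def Hf_def ..
  have I2: "(\<integral>x. (\<eta> \<epsilon> x)^2 * (sech (B*(x+a)/\<epsilon>))^2 * (sech (B*(x-a)/\<epsilon>))^2 \<partial>lborel)
      = 1/k*(1-a^2)*(16*E*(2*(k*a)-1))*(1+r2)"
    unfolding zp zm E_def r2(1)[symmetric] f_def by (simp add: mult.assoc)
  have KO: "K_overlap \<eta> \<epsilon> a b ad bd Bd = (1/2) * bd * sqrt (1 - b^2) * (4/k*(1-a^2)*(1+r1))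
      - (1/\<epsilon>) * b * (1 - b^2) powr (3/2) * (B * ad + Bd * a) * (1/k*(1-a^2)*(16*E*(2*(k*a)-1))*(1+r2))"
    unfolding K_overlap_def Let_def B_def[symmetric] I1 I2 ..
  have fin: "K_overlap \<eta> \<epsilon> a b ad bd Bd =
             2 * \<epsilon> * bd * sqrt (1 - b^2) / B * (1 - a^2) * (1 + r1)
           - 16 * b * (1 - b^2) powr (3/2)
               * (ad + Bd * a / B) * (1 - a^2)
               * E * (2 * B * a / \<epsilon> - 1) * (1 + r2)"
    unfolding KO k_def by (rule alg_final) (use e Bpos in auto)
  have R1': "\<bar>r1\<bar> \<le> (30*C1^2 + 1024*(1/(1-\<beta>^2)) + 9*C + 12) * \<epsilon> powr (1/3)"
    using R1 unfolding K_def Q_def tt_def .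
  have R2': "\<bar>r2\<bar> \<le> (30*C1^2 + 1024*(1/(1-\<beta>^2)) + 9*C + 12) * \<epsilon> powr (1/3)"
    using R2 unfolding K_def Q_def tt_def .
  show ?thesis unfolding Eeq unfolding B_def[symmetric]
    using R1' R2' fin by blast
qed

theorem lemma4:
  fixes \<eta> :: "real \<Rightarrow> real \<Rightarrow> real"
    and a b ad bd Bd :: "real \<Rightarrow> real"
  assumes eta: "eta_family \<eta>"
    and b_range: "\<exists>\<beta><1. \<forall>\<^sub>F \<epsilon> in at_right 0. \<bar>b \<epsilon>\<bar> \<le> \<beta>"
    and a_range: "\<forall>\<^sub>F \<epsilon> in at_right 0. 0 < a \<epsilon> \<and> a \<epsilon> < 1"
    and a_small: "\<exists>C1>0. \<forall>\<^sub>F \<epsilon> in at_right 0. a \<epsilon> \<le> C1 * \<epsilon> powr (1/6)"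
    and exp_small: "\<exists>C2>0. \<forall>\<^sub>F \<epsilon> in at_right 0.
        exp (-4 * Bpar (a \<epsilon>) (b \<epsilon>) * a \<epsilon> / \<epsilon>) \<le> C2 * \<epsilon>^2 * \<bar>ln \<epsilon>\<bar>"
  shows "\<exists>C. \<forall>\<^sub>F \<epsilon> in at_right 0. \<exists>r1 r2.
           \<bar>r1\<bar> \<le> C * \<epsilon> powr (1/3) \<and> \<bar>r2\<bar> \<le> C * \<epsilon> powr (1/3) \<and>
           K_overlap \<eta> \<epsilon> (a \<epsilon>) (b \<epsilon>) (ad \<epsilon>) (bd \<epsilon>) (Bd \<epsilon>) =
             2 * \<epsilon> * bd \<epsilon> * sqrt (1 - (b \<epsilon>)^2) / Bpar (a \<epsilon>) (b \<epsilon>) * (1 - (a \<epsilon>)^2) * (1 + r1)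
           - 16 * b \<epsilon> * (1 - (b \<epsilon>)^2) powr (3/2)
               * (ad \<epsilon> + Bd \<epsilon> * a \<epsilon> / Bpar (a \<epsilon>) (b \<epsilon>)) * (1 - (a \<epsilon>)^2)
               * exp (-4 * Bpar (a \<epsilon>) (b \<epsilon>) * a \<epsilon> / \<epsilon>)
               * (2 * Bpar (a \<epsilon>) (b \<epsilon>) * a \<epsilon> / \<epsilon> - 1) * (1 + r2)"
proof -
  from eta[unfolded eta_family_def] obtain \<epsilon>0 where e00: "\<epsilon>0 > 0"
    and H: "(\<forall>\<epsilon>. 0 < \<epsilon> \<and> \<epsilon> < \<epsilon>0 \<longrightarrow>
        (\<forall>x. \<eta> \<epsilon> x > 0)
      \<and> (\<forall>n x. ((deriv ^^ n) (\<eta> \<epsilon>)) differentiable (at x))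
      \<and> (\<forall>x. \<epsilon>^2 * (deriv ^^ 2) (\<eta> \<epsilon>) x + (1 - x^2 - (\<eta> \<epsilon> x)^2) * \<eta> \<epsilon> x = 0)
      \<and> (\<forall>c>0. ((\<lambda>x. \<eta> \<epsilon> x * exp (c * \<bar>x\<bar>)) \<longlongrightarrow> 0) at_infinity))"
    and H4: "\<exists>C>0. \<forall>\<epsilon>. 0 < \<epsilon> \<and> \<epsilon> < \<epsilon>0 \<longrightarrow> (\<forall>x.
            \<bar>\<eta> \<epsilon> x - eta0 x\<bar> \<le> C * \<epsilon> powr (1/3)
          \<and> \<bar>deriv (\<eta> \<epsilon>) x\<bar> \<le> C * \<epsilon> powr (-1/3)
          \<and> \<bar>(deriv ^^ 2) (\<eta> \<epsilon>) x\<bar> \<le> C / \<epsilon>)"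
    by (elim exE conjE) (rule that; blast)
  from H4 obtain C where C0: "C > 0" and H4': "\<forall>\<epsilon>. 0 < \<epsilon> \<and> \<epsilon> < \<epsilon>0 \<longrightarrow> (\<forall>x.
            \<bar>\<eta> \<epsilon> x - eta0 x\<bar> \<le> C * \<epsilon> powr (1/3)
          \<and> \<bar>deriv (\<eta> \<epsilon>) x\<bar> \<le> C * \<epsilon> powr (-1/3)
          \<and> \<bar>(deriv ^^ 2) (\<eta> \<epsilon>) x\<bar> \<le> C / \<epsilon>)" by blast
  have e0: "\<epsilon>0 > 0" "C > 0" using e00 C0 by auto
  have hd: "((deriv ^^ n) (\<eta> \<epsilon>)) differentiable (at x)" if "0 < \<epsilon>" "\<epsilon> < \<epsilon>0" for \<epsilon> n x
    using H that by blast
  have hb: "\<bar>\<eta> \<epsilon> x - eta0 x\<bar> \<le> C * \<epsilon> powr (1/3)" if "0 < \<epsilon>" "\<epsilon> < \<epsilon>0" for \<epsilon> x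
    using H4' that by blast
  obtain \<beta> where \<beta>: "\<beta> < 1" and evb: "\<forall>\<^sub>F \<epsilon> in at_right 0. \<bar>b \<epsilon>\<bar> \<le> \<beta>" using b_range by blast
  obtain C1 where C1: "C1 > 0" and eva: "\<forall>\<^sub>F \<epsilon> in at_right 0. a \<epsilon> \<le> C1 * \<epsilon> powr (1/6)" using a_small by blast
  obtain C2 where C2: "C2 > 0" and eve: "\<forall>\<^sub>F \<epsilon> in at_right 0.
        exp (-4 * Bpar (a \<epsilon>) (b \<epsilon>) * a \<epsilon> / \<epsilon>) \<le> C2 * \<epsilon>^2 * \<bar>ln \<epsilon>\<bar>" using exp_small by blast
  have ev1: "\<forall>\<^sub>F \<epsilon> in at_right 0. 0 < \<epsilon> \<and> \<epsilon> < min \<epsilon>0 1"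
    using eventually_at_right_real[of 0 "min \<epsilon>0 1"] e0 by (auto elim: eventually_mono)
  have l3: "((\<lambda>e::real. e powr (1/3)) \<longlongrightarrow> 0) (at_right 0)" by real_asymp
  have l6: "((\<lambda>e::real. e powr (1/6)) \<longlongrightarrow> 0) (at_right 0)" by real_asymp
  have ll: "((\<lambda>e::real. e powr (4/3) * \<bar>ln e\<bar>) \<longlongrightarrow> 0) (at_right 0)" by real_asymp
  have ev2: "\<forall>\<^sub>F \<epsilon> in at_right 0. C * \<epsilon> powr (1/3) < 1"
    using order_tendstoD(2)[OF tendsto_mult_left_zero[OF l3, of C], of 1] by (simp add: mult.commute)
  have ev3: "\<forall>\<^sub>F \<epsilon> in at_right 0. C1 * \<epsilon> powr (1/6) < 1/2"
    using order_tendstoD(2)[OF tendsto_mult_left_zero[OF l6, of C1], of "1/2"] by (simp add: mult.commute)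
  have ev4: "\<forall>\<^sub>F \<epsilon> in at_right 0. (10000*C2) * (\<epsilon> powr (4/3) * \<bar>ln \<epsilon>\<bar>) < 1"
    using order_tendstoD(2)[OF tendsto_mult_left_zero[OF ll, of "10000*C2"], of 1] by (simp add: mult.commute)
  show ?thesis
  proof (intro exI[of _ "30*C1^2 + 1024*(1/(1-\<beta>^2)) + 9*C + 12"])
    show "\<forall>\<^sub>F \<epsilon> in at_right 0. \<exists>r1 r2.
           \<bar>r1\<bar> \<le> (30*C1^2 + 1024*(1/(1-\<beta>^2)) + 9*C + 12) * \<epsilon> powr (1/3) \<and> \<bar>r2\<bar> \<le> (30*C1^2 + 1024*(1/(1-\<beta>^2)) + 9*C + 12) * \<epsilon> powr (1/3) \<and>
           K_overlap \<eta> \<epsilon> (a \<epsilon>) (b \<epsilon>) (ad \<epsilon>) (bd \<epsilon>) (Bd \<epsilon>) =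
             2 * \<epsilon> * bd \<epsilon> * sqrt (1 - (b \<epsilon>)^2) / Bpar (a \<epsilon>) (b \<epsilon>) * (1 - (a \<epsilon>)^2) * (1 + r1)
           - 16 * b \<epsilon> * (1 - (b \<epsilon>)^2) powr (3/2)
               * (ad \<epsilon> + Bd \<epsilon> * a \<epsilon> / Bpar (a \<epsilon>) (b \<epsilon>)) * (1 - (a \<epsilon>)^2)
               * exp (-4 * Bpar (a \<epsilon>) (b \<epsilon>) * a \<epsilon> / \<epsilon>)
               * (2 * Bpar (a \<epsilon>) (b \<epsilon>) * a \<epsilon> / \<epsilon> - 1) * (1 + r2)"
      using ev1 ev2 ev3 ev4 evb eva eve a_range
    proof eventually_elim
      case (elim \<epsilon>)
      have e: "0 < \<epsilon>" "\<epsilon> < 1" "\<epsilon> < \<epsilon>0" using elim(1) by auto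
      have cont: "continuous_on UNIV (\<eta> \<epsilon>)"
      proof -
        have "(\<eta> \<epsilon>) differentiable (at x)" for x using hd[OF e(1) e(3), of 0 x] by simp
        then show ?thesis by (intro continuous_at_imp_continuous_on) (auto intro: differentiable_imp_continuous_within)
      qed
      have tt: "\<epsilon> powr (1/3) > 0" using e by simp
      have ex: "exp (-4 * Bpar (a \<epsilon>) (b \<epsilon>) * a \<epsilon> / \<epsilon>) \<le> (\<epsilon> powr (1/3) / 100)^2"
      proof -
        have lnn: "\<bar>ln \<epsilon>\<bar> \<ge> 0" by simp
        have sq: "(\<epsilon> powr (1/3) / 100)^2 = \<epsilon> powr (2/3) / 10000"
        proof -
          have "(\<epsilon> powr (1/3))^2 = \<epsilon> powr (1/3 + 1/3)" by (simp only: power2_eq_square powr_add)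
          also have "(1/3 + 1/3::real) = 2/3" by simp
          finally show ?thesis by (simp add: power_divide)
        qed
        have e2: "\<epsilon>^2 = \<epsilon> powr (4/3) * \<epsilon> powr (2/3)"
        proof -
          have "\<epsilon> powr (4/3) * \<epsilon> powr (2/3) = \<epsilon> powr (4/3 + 2/3)" by (simp only: powr_add)
          also have "(4/3 + 2/3::real) = 2" by simp
          also have "\<epsilon> powr 2 = \<epsilon>^2" using e by (simp add: powr_numeral)
          finally show ?thesis by simp
        qed
        have "C2 * \<epsilon>^2 * \<bar>ln \<epsilon>\<bar> = ((10000*C2) * (\<epsilon> powr (4/3) * \<bar>ln \<epsilon>\<bar>)) * (\<epsilon> powr (2/3) / 10000)"
          unfolding e2 by (simp only: mult_ac) simp
        also have "\<dots> \<le> 1 * (\<epsilon> powr (2/3) / 10000)"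
          using elim(4) by (intro mult_right_mono) auto
        finally show ?thesis using elim(7) unfolding sq by simp
      qed
      have g1: "\<forall>x. \<bar>\<eta> \<epsilon> x - eta0 x\<bar> \<le> C * \<epsilon> powr (1/3)" using hb[OF e(1) e(3)] by blast
      have g2: "C * \<epsilon> powr (1/3) \<le> 1" using elim(2) by simp
      have g3: "0 < a \<epsilon>" using elim(8) by simp
      have g4: "a \<epsilon> \<le> 1/2" using elim(3) elim(6) by linarith
      show ?case by (rule fixed[where \<eta>=\<eta> and \<epsilon>=\<epsilon>, OF e(1,2) e0(2) g1 g2 cont g3 g4 elim(6) elim(5) \<beta> ex])
    qed
  qed
qed


end
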